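(* Let $\mathbb A_K^\cdot=\mathbb A_{K,f}\times\mathbb C^*$. The map $\Theta(\rho,s)=\rho s$ (product in $\mathbb A_K$, $\rho$ placed in the finite component) is well defined as a map $$\Theta:\hat{\mathcal O}\times_{\hat{\mathcal O}^*}(\mathbb A_K^*/K^* )\to\mathbb A_K^\cdot/K^*,$$ it is surjective, and two $K$-lattices have the same image under $\Theta$ if and only if they are commensurable. Hence $\Theta$ induces a bijection between commensurability classes of 1-dimensional $K$-lattices (not up to scaling) and $\mathbb A_K^\cdot/K^*$.
   Context: $K$ is an imaginary quadratic field with a fixed embedding $K\subset\mathbb C$, $\mathcal O$ its ring of integers, $\hat{\mathcal O}=\mathcal O\otimes\hat{\mathbb Z}$, $\mathbb A_{K,f}$ the finite adeles, $\mathbb A_K^*=\mathbb A_{K,f}^*\times\mathbb C^*$ the ideles with $K^*$ diagonally embedded. A $K$-lattice is a pair $(\Lambda,\phi)$ with $\Lambda\subset\mathbb C$ a finitely generated $\mathcal O$-submodule with $\Lambda\otimes_{\mathcal O}K\cong K$ and $\phi:K/\mathcal O\to K\Lambda/\Lambda$ an $\mathcal O$-module map; two are commensurable if $K\Lambda_1=K\Lambda_2$ and $\phi_1=\phi_2$ mod $\Lambda_1+\Lambda_2$. $K$-lattices are identified with $\hat{\mathcal O}\times_{\hat{\mathcal O}^*}(\mathbb A_K^*/K^* )$ (quotient by $(\rho,s)\mapsto(x^{-1}\rho,xs)$, $x\in\hat{\mathcal O}^*$) via $(\rho,s)\mapsto(\Lambda_s,\phi_{\rho,s})$, $\Lambda_s=s_\infty^{-1}(s_f\hat{\mathcal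 O}\cap K)$, $\phi_{\rho,s}(x)=s_\infty^{-1}[s_f\rho x]$ with $x\in K/\mathcal O\cong\mathbb A_{K,f}/\hat{\mathcal O}$ and $[\cdot]$ the class in $\mathbb A_{K,f}/s_f\hat{\mathcal O}\cong K/(s_f\hat{\mathcal O}\cap K)$. *)

theory Defs
  imports Complex_Main "HOL-Computational_Algebra.Polynomial"
begin

text \<open>K is given as a subset of the complex numbers (i.e. with its fixed embedding).
  It is an imaginary quadratic field iff K = Q(w) for some non-real w with w^2 rational.\<close>
definition imag_quadratic :: "complex set \<Rightarrow> bool" where
  "imag_quadratic K \<longleftrightarrow>
     (\<exists>w. Im w \<noteq> 0 \<and> w^2 \<in> \<rat> \<and> K = {a + b * w | a b. a \<in> \<rat> \<and> b \<in> \<rat>})"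

definition ring_of_integers :: "complex set \<Rightarrow> complex set" where
  "ring_of_integers K = {z \<in> K. algebraic_int z}"

definition scaleO :: "complex set \<Rightarrow> nat \<Rightarrow> complex set" where
  "scaleO K n = (\<lambda>z. of_nat n * z) ` ring_of_integers K"

text \<open>An element of O-hat is represented by a compatible system (a n) with a n in O,
  a m = a n mod nO whenever n divides m (indices n >= 1; the value at 0 is ignored).\<close>
type_synonym ohat = "nat \<Rightarrow> complex"

definition Ohat :: "complex set \<Rightarrow> ohat set" where
  "Ohat K = {a. (\<forall>n>0. a n \<in> ring_of_integers K) \<and>
                (\<forall>n>0. \<forall>m>0. n dvd m \<longrightarrow> a m - a n \<in> scaleO K n)}"

definition ohat_eq :: "complex set \<Rightarrow> ohat \<Rightarrow> ohat \<Rightarrow> bool" where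
  "ohat_eq K a b \<longleftrightarrow> (\<forall>n>0. a n - b n \<in> scaleO K n)"

definition Ohat_units :: "complex set \<Rightarrow> ohat set" where
  "Ohat_units K = {x \<in> Ohat K. \<exists>y \<in> Ohat K. ohat_eq K (\<lambda>n. x n * y n) (\<lambda>n. 1)}"

section \<open>Finite adeles A_{K,f} = O-hat tensor Q, represented as fractions a / D\<close>

type_synonym fadele = "nat \<times> ohat"

definition Af :: "complex set \<Rightarrow> fadele set" where
  "Af K = {(D, a). D > 0 \<and> a \<in> Ohat K}"

definition fa_eq :: "complex set \<Rightarrow> fadele \<Rightarrow> fadele \<Rightarrow> bool" where
  "fa_eq K x y \<longleftrightarrow>
     ohat_eq K (\<lambda>n. of_nat (fst y) * snd x n) (\<lambda>n. of_nat (fst x) * snd y n)"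

definition fa_add :: "fadele \<Rightarrow> fadele \<Rightarrow> fadele" where
  "fa_add x y = (fst x * fst y, \<lambda>n. of_nat (fst y) * snd x n + of_nat (fst x) * snd y n)"

definition fa_neg :: "fadele \<Rightarrow> fadele" where
  "fa_neg x = (fst x, \<lambda>n. - snd x n)"

definition fa_mult :: "fadele \<Rightarrow> fadele \<Rightarrow> fadele" where
  "fa_mult x y = (fst x * fst y, \<lambda>n. snd x n * snd y n)"

definition fa_of_ohat :: "ohat \<Rightarrow> fadele" where
  "fa_of_ohat a = (1, a)"

text \<open>K inside A_{K,f} (diagonal embedding): k = (d k) / d with d k in O.\<close>
definition fa_of_K :: "complex set \<Rightarrow> complex \<Rightarrow> fadele" where
  "fa_of_K K k = (let d = (LEAST d::nat. d > 0 \<and> of_nat d * k \<in> ring_of_integers K)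
                  in (d, \<lambda>n. of_nat d * k))"

definition Af_units :: "complex set \<Rightarrow> fadele set" where
  "Af_units K = {x \<in> Af K. \<exists>y \<in> Af K. fa_eq K (fa_mult x y) (1, \<lambda>n. 1)}"

definition in_sOhat :: "complex set \<Rightarrow> fadele \<Rightarrow> fadele \<Rightarrow> bool" where
  "in_sOhat K sf y \<longleftrightarrow> (\<exists>a \<in> Ohat K. fa_eq K y (fa_mult sf (fa_of_ohat a)))"

type_synonym adele = "fadele \<times> complex"

definition ideles :: "complex set \<Rightarrow> adele set" where
  "ideles K = {(u, z). u \<in> Af_units K \<and> z \<noteq> 0}"

definition Adot :: "complex set \<Rightarrow> adele set" where
  "Adot K = {(u, z). u \<in> Af K \<and> z \<noteq> 0}"

definition modK_eq :: "complex set \<Rightarrow> adele \<Rightarrow> adele \<Rightarrow> bool" where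
  "modK_eq K x y \<longleftrightarrow>
     (\<exists>k \<in> K - {0}. fa_eq K (fst y) (fa_mult (fa_of_K K k) (fst x)) \<and> snd y = k * snd x)"

section \<open>K-lattices as O-hat x_{O-hat^*} (A_K^*/K^*)\<close>

definition klat_eq :: "complex set \<Rightarrow> ohat \<times> adele \<Rightarrow> ohat \<times> adele \<Rightarrow> bool" where
  "klat_eq K p q \<longleftrightarrow>
     (\<exists>x \<in> Ohat K. \<exists>y \<in> Ohat K. ohat_eq K (\<lambda>n. x n * y n) (\<lambda>n. 1) \<and>
        ohat_eq K (fst q) (\<lambda>n. y n * fst p n) \<and>
        modK_eq K (fa_mult (fa_of_ohat x) (fst (snd p)), snd (snd p)) (snd q))"

definition Lambda :: "complex set \<Rightarrow> adele \<Rightarrow> complex set" where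
  "Lambda K s = (\<lambda>k. k / snd s) ` {k \<in> K. in_sOhat K (fst s) (fa_of_K K k)}"

text \<open>phi_rep K rho s x c: c in C represents phi_{rho,s}(x) in K Lambda_s / Lambda_s,
  i.e. c = s_inf^{-1} k with k in K and k = s_f rho x mod s_f O-hat.\<close>
definition phi_rep :: "complex set \<Rightarrow> ohat \<Rightarrow> adele \<Rightarrow> complex \<Rightarrow> complex \<Rightarrow> bool" where
  "phi_rep K \<rho> s x c \<longleftrightarrow>
     (\<exists>k \<in> K. c = k / snd s \<and>
        in_sOhat K (fst s)
          (fa_add (fa_of_K K k)
                  (fa_neg (fa_mult (fa_mult (fst s) (fa_of_ohat \<rho>)) (fa_of_K K x)))))"

definition Kspan :: "complex set \<Rightarrow> complex set \<Rightarrow> complex set" where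
  "Kspan K L = {k * l | k l. k \<in> K \<and> l \<in> L}"

definition setsum :: "complex set \<Rightarrow> complex set \<Rightarrow> complex set" where
  "setsum A B = {a + b | a b. a \<in> A \<and> b \<in> B}"

definition commensurable :: "complex set \<Rightarrow> ohat \<times> adele \<Rightarrow> ohat \<times> adele \<Rightarrow> bool" where
  "commensurable K p q \<longleftrightarrow>
     Kspan K (Lambda K (snd p)) = Kspan K (Lambda K (snd q)) \<and>
     (\<forall>x \<in> K. \<forall>c1 c2. phi_rep K (fst p) (snd p) x c1 \<longrightarrow> phi_rep K (fst q) (snd q) x c2 \<longrightarrow>
        c1 - c2 \<in> setsum (Lambda K (snd p)) (Lambda K (snd q)))"

definition Theta :: "ohat \<times> adele \<Rightarrow> adele" where
  "Theta p = (fa_mult (fa_of_ohat (fst p)) (fst (snd p)), snd (snd p))"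

definition klattices :: "complex set \<Rightarrow> (ohat \<times> adele) set" where
  "klattices K = Ohat K \<times> ideles K"

end

theory Submission
  imports Defs "Jordan_Normal_Form.Char_Poly"
begin

lemma algint_eig:
  fixes A :: "nat \<Rightarrow> nat \<Rightarrow> int" and v :: "nat \<Rightarrow> complex" and N :: nat and z :: complex
  assumes N: "N > 0" and v0: "v 0 \<noteq> 0"
    and eq: "\<And>r. r < N \<Longrightarrow> (\<Sum>s<N. of_int (A r s) * v s) = z * v r"
  shows "algebraic_int z"
proof -
  define M :: "int mat" where "M = mat N N (\<lambda>(r,s). A r s)"
  define M' :: "complex mat" where "M' = map_mat of_int M"
  define w where "w = vec N v"
  have M: "M \<in> carrier_mat N N" unfolding M_def by auto
  have M': "M' \<in> carrier_mat N N" unfolding M'_def M_def by auto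
  have "eigenvector M' w z"
    unfolding eigenvector_def
  proof (intro conjI)
    show "w \<in> carrier_vec (dim_row M')" using M' unfolding w_def by auto
    show "w \<noteq> 0\<^sub>v (dim_row M')"
    proof
      assume "w = 0\<^sub>v (dim_row M')"
      hence "w $ 0 = 0" using M' N by auto
      thus False using v0 N unfolding w_def by auto
    qed
    show "M' *\<^sub>v w = z \<cdot>\<^sub>v w"
    proof (rule eq_vecI)
      fix r assume r: "r < dim_vec (z \<cdot>\<^sub>v w)"
      hence r': "r < N" unfolding w_def by auto
      have "(M' *\<^sub>v w) $ r = (\<Sum>s\<in>{0..<N}. M' $$ (r,s) * w $ s)"
        using r' M' unfolding w_def by (auto simp: scalar_prod_def)
      also have "\<dots> = (\<Sum>s<N. of_int (A r s) * v s)"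
        using r' by (intro sum.cong) (auto simp: M'_def M_def w_def)
      also have "\<dots> = z * v r" using eq[OF r'] .
      finally show "(M' *\<^sub>v w) $ r = (z \<cdot>\<^sub>v w) $ r" using r' unfolding w_def by auto
    qed (auto simp: M'_def M_def w_def)
  qed
  hence "eigenvalue M' z" unfolding eigenvalue_def by auto
  hence "poly (char_poly M') z = 0" using eigenvalue_root_char_poly[OF M'] by auto
  moreover have e: "char_poly M' = of_int_poly (char_poly M)" unfolding M'_def by (rule of_int_hom.char_poly_hom[OF M])
  ultimately have "poly (of_int_poly (char_poly M)) z = 0" by metis
  moreover have "lead_coeff (char_poly M) = 1" using degree_monic_char_poly[OF M] by simp
  ultimately show ?thesis unfolding algebraic_int_altdef_ipoly by blast
qed

lemma sum_divmod:
  fixes m n :: nat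
  assumes m: "m > 0"
  shows "(\<Sum>s<n*m. f (s div m) (s mod m)) = (\<Sum>k<n. \<Sum>l<m. (f k l :: 'a :: comm_monoid_add))"
proof -
  have "(\<Sum>k<n. \<Sum>l<m. f k l) = (\<Sum>(k,l)\<in>{..<n}\<times>{..<m}. f k l)"
    by (rule sum.cartesian_product)
  also have "\<dots> = (\<Sum>s<n*m. f (s div m) (s mod m))"
  proof (rule sum.reindex_bij_witness[where i = "\<lambda>s. (s div m, s mod m)" and j = "\<lambda>(k,l). k*m+l"])
    fix a assume "a \<in> {..<n}\<times>{..<m}"
    then obtain k l where a: "a = (k,l)" "k < n" "l < m" by auto
    show "((case a of (k, l) \<Rightarrow> k * m + l) div m, (case a of (k, l) \<Rightarrow> k * m + l) mod m) = a"
      using a m by auto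
    have "k*m + l < k*m + m" using a by simp
    also have "\<dots> = (k+1)*m" by simp
    also have "\<dots> \<le> n*m" using a by (intro mult_right_mono) auto
    finally show "(case a of (k, l) \<Rightarrow> k * m + l) \<in> {..<n*m}" using a by simp
  next
    fix s assume s: "s \<in> {..<n*m}"
    show "(case (s div m, s mod m) of (k, l) \<Rightarrow> k * m + l) = s" by simp
    show "(s div m, s mod m) \<in> {..<n} \<times> {..<m}" using s m
      by (auto simp: less_mult_imp_div_less mult.commute)
  qed auto
  finally show ?thesis by simp
qed

definition cmp :: "int poly \<Rightarrow> nat \<Rightarrow> nat \<Rightarrow> int" where
  "cmp p i k = (if i + 1 < degree p then (if k = i + 1 then 1 else 0) else - coeff p k)"

lemma comp_rel:
  fixes p :: "int poly" and x :: complex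
  assumes px: "poly (of_int_poly p) x = 0" and lc: "lead_coeff p = 1" and i: "i < degree p"
  shows "x^(i+1) = (\<Sum>k<degree p. of_int (cmp p i k) * x^k)"
proof (cases "i + 1 < degree p")
  case True
  have "(\<Sum>k<degree p. of_int (cmp p i k) * x^k) = (\<Sum>k<degree p. if k = i + 1 then x^k else 0)"
    using True by (intro sum.cong) (auto simp: cmp_def)
  also have "\<dots> = x^(i+1)" using True by (simp add: sum.delta)
  finally show ?thesis by simp
next
  case False
  hence n: "degree p = i + 1" using i by simp
  have "0 = poly (of_int_poly p) x" using px by simp
  also have "\<dots> = (\<Sum>k\<le>degree p. of_int (coeff p k) * x^k)"
    by (simp add: poly_altdef degree_map_poly coeff_map_poly)
  also have "{..degree p} = insert (degree p) {..<degree p}" by auto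
  also have "(\<Sum>k\<in>insert (degree p) {..<degree p}. of_int (coeff p k) * x^k)
      = x^(i+1) + (\<Sum>k<degree p. of_int (coeff p k) * x^k)"
    using lc n by (subst sum.insert) auto
  finally have "x^(i+1) = - (\<Sum>k<degree p. of_int (coeff p k) * x^k)"
    by (simp add: eq_neg_iff_add_eq_0 add.commute)
  also have "\<dots> = (\<Sum>k<degree p. of_int (cmp p i k) * x^k)"
    using False by (simp add: cmp_def sum_negf)
  finally show ?thesis .
qed

lemma algint_poly:
  fixes x :: complex
  assumes "algebraic_int x"
  obtains p :: "int poly" where "poly (of_int_poly p) x = 0" "lead_coeff p = 1" "degree p > 0"
proof -
  obtain p :: "int poly" where p: "poly (of_int_poly p) x = 0" "lead_coeff p = 1"
    using assms unfolding algebraic_int_altdef_ipoly by blast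
  have "degree p > 0"
  proof (rule ccontr)
    assume "\<not> degree p > 0"
    hence "p = [:1:]" using p(2) by (metis gr0I leading_coeff_0_iff degree_eq_zeroE lead_coeff_pCons(2) pCons_0_0 zero_neq_one)
    thus False using p(1) by simp
  qed
  thus ?thesis using p that by blast
qed

lemma algint_mult:
  fixes x y :: complex
  assumes "algebraic_int x" "algebraic_int y"
  shows "algebraic_int (x * y)"
proof -
  obtain p where p: "poly (of_int_poly p) x = 0" "lead_coeff p = 1" "degree p > 0"
    using algint_poly[OF assms(1)] by blast
  obtain q where q: "poly (of_int_poly q) y = 0" "lead_coeff q = 1" "degree q > 0"
    using algint_poly[OF assms(2)] by blast
  define n where "n = degree p"
  define m where "m = degree q"
  have n: "n > 0" and m: "m > 0" using p q by (auto simp: n_def m_def)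
  define v where "v = (\<lambda>r. x^(r div m) * y^(r mod m))"
  define A where "A = (\<lambda>r s. cmp p (r div m) (s div m) * cmp q (r mod m) (s mod m))"
  show ?thesis
  proof (rule algint_eig[where N = "n*m" and v = v and A = A])
    show "n*m > 0" using n m by simp
    show "v 0 \<noteq> 0" by (simp add: v_def)
    fix r assume r: "r < n*m"
    define i where "i = r div m"
    define j where "j = r mod m"
    have i: "i < n" using r m unfolding i_def by (simp add: less_mult_imp_div_less)
    have j: "j < m" using m unfolding j_def by simp
    have "(\<Sum>s<n*m. of_int (A r s) * v s) =
        (\<Sum>s<n*m. (\<lambda>k l. of_int (cmp p i k) * x^k * (of_int (cmp q j l) * y^l)) (s div m) (s mod m))"
      by (intro sum.cong) (auto simp: A_def v_def i_def j_def)
    also have "\<dots> = (\<Sum>k<n. \<Sum>l<m. of_int (cmp p i k) * x^k * (of_int (cmp q j l) * y^l))"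
      by (rule sum_divmod[OF m])
    also have "\<dots> = (\<Sum>k<n. of_int (cmp p i k) * x^k) * (\<Sum>l<m. of_int (cmp q j l) * y^l)"
      by (simp add: sum_product)
    also have "\<dots> = x^(i+1) * y^(j+1)"
      using comp_rel[OF p(1,2), of i] comp_rel[OF q(1,2), of j] i j by (simp add: n_def m_def)
    also have "\<dots> = x * y * v r" by (simp add: v_def i_def j_def)
    finally show "(\<Sum>s<n*m. of_int (A r s) * v s) = x * y * v r" .
  qed
qed

lemma algint_add:
  fixes x y :: complex
  assumes "algebraic_int x" "algebraic_int y"
  shows "algebraic_int (x + y)"
proof -
  obtain p where p: "poly (of_int_poly p) x = 0" "lead_coeff p = 1" "degree p > 0"
    using algint_poly[OF assms(1)] by blast
  obtain q where q: "poly (of_int_poly q) y = 0" "lead_coeff q = 1" "degree q > 0"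
    using algint_poly[OF assms(2)] by blast
  define n where "n = degree p"
  define m where "m = degree q"
  have n: "n > 0" and m: "m > 0" using p q by (auto simp: n_def m_def)
  define v where "v = (\<lambda>r. x^(r div m) * y^(r mod m))"
  define A where "A = (\<lambda>r s. cmp p (r div m) (s div m) * (if r mod m = s mod m then 1 else 0)
     + (if r div m = s div m then 1 else 0) * cmp q (r mod m) (s mod m))"
  show ?thesis
  proof (rule algint_eig[where N = "n*m" and v = v and A = A])
    show "n*m > 0" using n m by simp
    show "v 0 \<noteq> 0" by (simp add: v_def)
    fix r assume r: "r < n*m"
    define i where "i = r div m"
    define j where "j = r mod m"
    have i: "i < n" using r m unfolding i_def by (simp add: less_mult_imp_div_less)
    have j: "j < m" using m unfolding j_def by simp
    have "(\<Sum>s<n*m. of_int (A r s) * v s) =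
        (\<Sum>s<n*m. (\<lambda>k l. (if l = j then of_int (cmp p i k) * x^k * y^l else 0)
            + (if k = i then x^k * (of_int (cmp q j l) * y^l) else 0)) (s div m) (s mod m))"
      by (intro sum.cong) (auto simp: A_def v_def i_def j_def algebra_simps)
    also have "\<dots> = (\<Sum>k<n. \<Sum>l<m. (if l = j then of_int (cmp p i k) * x^k * y^l else 0)
            + (if k = i then x^k * (of_int (cmp q j l) * y^l) else 0))"
      by (rule sum_divmod[OF m])
    also have "\<dots> = (\<Sum>k<n. of_int (cmp p i k) * x^k * y^j) + x^i * (\<Sum>l<m. of_int (cmp q j l) * y^l)"
    proof -
      have e1: "(\<Sum>l<m. if l = j then of_int (cmp p i k) * x^k * y^l else 0) = of_int (cmp p i k) * x^k * y^j" for k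
        using j by (simp add: sum.delta)
      have e2: "(\<Sum>l<m. if k = i then x^k * (of_int (cmp q j l) * y^l) else 0)
          = (if k = i then x^i * (\<Sum>l<m. of_int (cmp q j l) * y^l) else 0)" for k
        by (simp add: sum_distrib_left)
      show ?thesis using i by (simp add: sum.distrib e1 e2)
    qed
    also have "\<dots> = x^(i+1) * y^j + x^i * y^(j+1)"
      using comp_rel[OF p(1,2), of i] comp_rel[OF q(1,2), of j] i j
      by (simp add: n_def m_def sum_distrib_right)
    also have "\<dots> = (x + y) * v r" by (simp add: v_def i_def j_def algebra_simps)
    finally show "(\<Sum>s<n*m. of_int (A r s) * v s) = (x + y) * v r" .
  qed
qed

locale iqf =
  fixes K :: "complex set"
  assumes iq: "imag_quadratic K"
begin

abbreviation OK where "OK \<equiv> ring_of_integers K"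

definition w where "w = (SOME w. Im w \<noteq> 0 \<and> w^2 \<in> \<rat> \<and> K = {a + b * w | a b. a \<in> \<rat> \<and> b \<in> \<rat>})"

lemma w: "Im w \<noteq> 0" "w^2 \<in> \<rat>" "K = {a + b * w | a b. a \<in> \<rat> \<and> b \<in> \<rat>}"
proof -
  have "\<exists>w. Im w \<noteq> 0 \<and> w^2 \<in> \<rat> \<and> K = {a + b * w | a b. a \<in> \<rat> \<and> b \<in> \<rat>}"
    using iq unfolding imag_quadratic_def by blast
  from someI_ex[OF this] show "Im w \<noteq> 0" "w^2 \<in> \<rat>" "K = {a + b * w | a b. a \<in> \<rat> \<and> b \<in> \<rat>}"
    unfolding w_def by blast+
qed

lemma KE: assumes "x \<in> K" obtains a b where "a \<in> \<rat>" "b \<in> \<rat>" "x = a + b * w"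
  using assms w(3) by blast

lemma KI: "a \<in> \<rat> \<Longrightarrow> b \<in> \<rat> \<Longrightarrow> a + b * w \<in> K"
  using w(3) by blast

lemma K_add: "x \<in> K \<Longrightarrow> y \<in> K \<Longrightarrow> x + y \<in> K"
proof -
  assume "x \<in> K" "y \<in> K"
  then obtain a b c d where "a \<in> \<rat>" "b \<in> \<rat>" "x = a + b * w" "c \<in> \<rat>" "d \<in> \<rat>" "y = c + d * w"
    by (metis KE)
  thus ?thesis using KI[of "a + c" "b + d"] by (simp add: algebra_simps)
qed

lemma K_uminus: "x \<in> K \<Longrightarrow> - x \<in> K"
proof -
  assume "x \<in> K"
  then obtain a b where "a \<in> \<rat>" "b \<in> \<rat>" "x = a + b * w" by (metis KE)
  thus ?thesis using KI[of "- a" "- b"] by (simp add: algebra_simps)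
qed

lemma K_diff: "x \<in> K \<Longrightarrow> y \<in> K \<Longrightarrow> x - y \<in> K"
  using K_add[of x "-y"] K_uminus[of y] by simp

lemma K_mult: "x \<in> K \<Longrightarrow> y \<in> K \<Longrightarrow> x * y \<in> K"
proof -
  assume "x \<in> K" "y \<in> K"
  then obtain a b c d where "a \<in> \<rat>" "b \<in> \<rat>" "x = a + b * w" "c \<in> \<rat>" "d \<in> \<rat>" "y = c + d * w"
    by (metis KE)
  moreover have "x * y = (a*c + b*d*w^2) + (a*d + b*c) * w"
    using calculation by (simp add: algebra_simps power2_eq_square)
  ultimately show ?thesis using KI[of "a*c + b*d*w^2" "a*d + b*c"] w(2) by simp
qed

lemma K_Rats: "q \<in> \<rat> \<Longrightarrow> q \<in> K"
  using KI[of q 0] by simp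

lemma K_of_nat [simp]: "of_nat n \<in> K" and K_of_int [simp]: "of_int m \<in> K"
  and K_0 [simp]: "0 \<in> K" and K_1 [simp]: "1 \<in> K"
  by (auto intro: K_Rats)

lemma K_inverse: "x \<in> K \<Longrightarrow> inverse x \<in> K"
proof -
  assume "x \<in> K"
  then obtain a b where ab: "a \<in> \<rat>" "b \<in> \<rat>" "x = a + b * w" by (metis KE)
  show ?thesis
  proof (cases "x = 0")
    case True thus ?thesis by simp
  next
    case False
    define N where "N = a^2 - b^2 * w^2"
    have N: "N \<noteq> 0"
    proof
      assume N0: "N = 0"
      show False
      proof (cases "b = 0")
        case True thus False using N0 False ab unfolding N_def by simp
      next
        case b: False
        have "w^2 = (a/b)^2" using N0 b unfolding N_def by (simp add: field_simps)
        hence "w = a/b \<or> w = -(a/b)" by (simp add: power2_eq_iff)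
        moreover have "a / b \<in> \<rat>" using ab by simp
        hence "Im (a/b) = 0" by (auto elim!: Rats_cases')
        ultimately show False using w(1) by auto
      qed
    qed
    have "x * (a - b * w) = N" unfolding N_def ab(3) by (simp add: algebra_simps power2_eq_square)
    hence "inverse x = (a / N) + (- b / N) * w" using N False
      by (simp add: field_simps)
    moreover have "N \<in> \<rat>" unfolding N_def using ab w(2) by simp
    ultimately show ?thesis using KI[of "a/N" "-b/N"] ab by simp
  qed
qed

lemma K_divide: "x \<in> K \<Longrightarrow> y \<in> K \<Longrightarrow> x / y \<in> K"
  using K_mult[of x "inverse y"] K_inverse[of y] by (simp add: divide_inverse)

lemma OK_K: "x \<in> OK \<Longrightarrow> x \<in> K" by (simp add: ring_of_integers_def)
lemma OK_add: "x \<in> OK \<Longrightarrow> y \<in> OK \<Longrightarrow> x + y \<in> OK"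
  by (auto simp: ring_of_integers_def K_add algint_add)
lemma OK_mult: "x \<in> OK \<Longrightarrow> y \<in> OK \<Longrightarrow> x * y \<in> OK"
  by (auto simp: ring_of_integers_def K_mult algint_mult)
lemma OK_uminus: "x \<in> OK \<Longrightarrow> - x \<in> OK"
  by (auto simp: ring_of_integers_def K_uminus)
lemma OK_diff: "x \<in> OK \<Longrightarrow> y \<in> OK \<Longrightarrow> x - y \<in> OK"
  using OK_add[of x "-y"] OK_uminus[of y] by simp
lemma OK_of_int [simp]: "of_int m \<in> OK" and OK_of_nat [simp]: "of_nat n \<in> OK"
  and OK_0 [simp]: "0 \<in> OK" and OK_1 [simp]: "1 \<in> OK"
  by (auto simp: ring_of_integers_def)

lemma Rats_denom: assumes "(q::complex) \<in> \<rat>" obtains d :: nat where "d > 0" "of_nat d * q \<in> \<int>"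
proof -
  from assms obtain a b where ab: "b > 0" "(q::complex) = of_int a / of_int b" by (auto elim: Rats_cases')
  hence "of_nat (nat b) * q = of_int a" by simp
  thus ?thesis using that[of "nat b"] ab by auto
qed

lemma K_denom: assumes "x \<in> K" obtains d :: nat where "d > 0" "of_nat d * x \<in> OK"
proof -
  obtain a b where ab: "a \<in> \<rat>" "b \<in> \<rat>" "x = a + b * w" using assms by (metis KE)
  obtain d1 where d1: "d1 > 0" "of_nat d1 * a \<in> \<int>" using Rats_denom[OF ab(1)] by blast
  obtain d2 where d2: "d2 > 0" "of_nat d2 * b \<in> \<int>" using Rats_denom[OF ab(2)] by blast
  obtain d3 where d3: "d3 > 0" "of_nat d3 * w^2 \<in> \<int>" using Rats_denom[OF w(2)] by blast
  define d where "d = d1 * d2 * d3"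
  have "of_nat d * a = of_nat (d2 * d3) * (of_nat d1 * a)" unfolding d_def by (simp add: algebra_simps)
  also have "\<dots> \<in> \<int>" using d1 by simp
  finally have A: "algebraic_int (of_nat d * a)" by (rule int_imp_algebraic_int)
  have "(of_nat d * b * w)^2 = (of_nat d2 * b)^2 * of_nat (d1*d1*d3) * (of_nat d3 * w^2)"
    unfolding d_def by (simp add: algebra_simps power2_eq_square)
  also have "\<dots> \<in> \<int>" using d2 d3 by simp
  finally have "algebraic_int ((of_nat d * b * w)^2)" by (rule int_imp_algebraic_int)
  hence B: "algebraic_int (of_nat d * b * w)"
    by (rule algebraic_int_root[where p = "monom 1 2"]) (auto simp: poly_monom degree_monom_eq)
  have "of_nat d * x = of_nat d * a + of_nat d * b * w" by (simp add: ab algebra_simps)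
  hence "algebraic_int (of_nat d * x)" using algint_add[OF A B] by simp
  moreover have "of_nat d * x \<in> K" using assms by (simp add: K_mult)
  moreover have "d > 0" using d1 d2 d3 by (simp add: d_def)
  ultimately show ?thesis using that by (auto simp: ring_of_integers_def)
qed

end

context iqf begin

lemma mem_scaleO: "n > 0 \<Longrightarrow> z \<in> scaleO K n \<longleftrightarrow> z / of_nat n \<in> OK"
  unfolding scaleO_def image_iff by (metis nonzero_mult_div_cancel_left nonzero_eq_divide_eq of_nat_eq_0_iff not_gr0)

lemma sO_0 [simp]: "0 \<in> scaleO K n"
  unfolding scaleO_def by (auto simp: image_iff intro!: bexI[of _ 0])

lemma sO_add: "n > 0 \<Longrightarrow> x \<in> scaleO K n \<Longrightarrow> y \<in> scaleO K n \<Longrightarrow> x + y \<in> scaleO K n"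
  by (simp add: mem_scaleO add_divide_distrib OK_add)
lemma sO_uminus: "n > 0 \<Longrightarrow> x \<in> scaleO K n \<Longrightarrow> - x \<in> scaleO K n"
  by (simp add: mem_scaleO OK_uminus)
lemma sO_diff: "n > 0 \<Longrightarrow> x \<in> scaleO K n \<Longrightarrow> y \<in> scaleO K n \<Longrightarrow> x - y \<in> scaleO K n"
  by (simp add: mem_scaleO diff_divide_distrib OK_diff)
lemma sO_mult: "n > 0 \<Longrightarrow> x \<in> scaleO K n \<Longrightarrow> c \<in> OK \<Longrightarrow> c * x \<in> scaleO K n"
  using OK_mult[of c "x / of_nat n"] by (simp add: mem_scaleO)
lemma sO_mult2: "n > 0 \<Longrightarrow> x \<in> scaleO K n \<Longrightarrow> c \<in> OK \<Longrightarrow> x * c \<in> scaleO K n"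
  using sO_mult[of n x c] by (simp add: mult.commute)
lemma sO_OK: "n > 0 \<Longrightarrow> x \<in> scaleO K n \<Longrightarrow> x \<in> OK"
  using OK_mult[of "of_nat n" "x / of_nat n"] by (simp add: mem_scaleO)
lemma sO_of_OK: "n > 0 \<Longrightarrow> c \<in> OK \<Longrightarrow> of_nat n * c \<in> scaleO K n"
  by (simp add: mem_scaleO)
lemma sO_dvd: assumes "n > 0" "m > 0" "n dvd m" "x \<in> scaleO K m" shows "x \<in> scaleO K n"
proof -
  obtain k where k: "m = n * k" using assms(3) by blast
  have 1: "x / of_nat m \<in> OK" using assms mem_scaleO by blast
  have "x / of_nat n = of_nat k * (x / of_nat m)" using assms(1,2) k by (simp add: field_simps)
  hence "x / of_nat n \<in> OK" using OK_mult[OF OK_of_nat[of k] 1] by (simp only:)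
  thus ?thesis using assms mem_scaleO by blast
qed
lemma sO_scale: "n > 0 \<Longrightarrow> d > 0 \<Longrightarrow> x \<in> scaleO K n \<Longrightarrow> of_nat d * x \<in> scaleO K (d * n)"
  by (simp add: mem_scaleO)
lemma sO_cancel: "n > 0 \<Longrightarrow> d > 0 \<Longrightarrow> of_nat d * x \<in> scaleO K (d * n) \<Longrightarrow> x \<in> scaleO K n"
  by (simp add: mem_scaleO)

lemma OhatI: "(\<And>n. n > 0 \<Longrightarrow> a n \<in> OK) \<Longrightarrow> (\<And>n m. n > 0 \<Longrightarrow> m > 0 \<Longrightarrow> n dvd m \<Longrightarrow> a m - a n \<in> scaleO K n) \<Longrightarrow> a \<in> Ohat K"
  unfolding Ohat_def by blast
lemma OhatD1: "a \<in> Ohat K \<Longrightarrow> n > 0 \<Longrightarrow> a n \<in> OK"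
  unfolding Ohat_def by blast
lemma OhatD2: "a \<in> Ohat K \<Longrightarrow> n > 0 \<Longrightarrow> m > 0 \<Longrightarrow> n dvd m \<Longrightarrow> a m - a n \<in> scaleO K n"
  unfolding Ohat_def by blast

lemma Ohat_const: "c \<in> OK \<Longrightarrow> (\<lambda>n. c) \<in> Ohat K"
  by (rule OhatI) auto
lemma Ohat_add: "a \<in> Ohat K \<Longrightarrow> b \<in> Ohat K \<Longrightarrow> (\<lambda>n. a n + b n) \<in> Ohat K"
proof (rule OhatI)
  fix n m :: nat assume *: "a \<in> Ohat K" "b \<in> Ohat K" "n > 0" "m > 0" "n dvd m"
  have "a m + b m - (a n + b n) = (a m - a n) + (b m - b n)" by simp
  thus "a m + b m - (a n + b n) \<in> scaleO K n" using * by (metis OhatD2 sO_add)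
qed (auto intro: OK_add OhatD1)
lemma Ohat_uminus: "a \<in> Ohat K \<Longrightarrow> (\<lambda>n. - a n) \<in> Ohat K"
proof (rule OhatI)
  fix n m :: nat assume *: "a \<in> Ohat K" "n > 0" "m > 0" "n dvd m"
  have "- a m - (- a n) = - (a m - a n)" by simp
  thus "- a m - (- a n) \<in> scaleO K n" using * by (metis OhatD2 sO_uminus)
qed (auto intro: OK_uminus OhatD1)
lemma Ohat_diff: "a \<in> Ohat K \<Longrightarrow> b \<in> Ohat K \<Longrightarrow> (\<lambda>n. a n - b n) \<in> Ohat K"
  using Ohat_add[of a "\<lambda>n. - b n"] Ohat_uminus[of b] by simp
lemma Ohat_mult: "a \<in> Ohat K \<Longrightarrow> b \<in> Ohat K \<Longrightarrow> (\<lambda>n. a n * b n) \<in> Ohat K"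
proof (rule OhatI)
  fix n m :: nat assume *: "a \<in> Ohat K" "b \<in> Ohat K" "n > 0" "m > 0" "n dvd m"
  have "a m * b m - a n * b n = (a m - a n) * b m + a n * (b m - b n)" by (simp add: algebra_simps)
  thus "a m * b m - a n * b n \<in> scaleO K n" using *
    by (metis OhatD1 OhatD2 sO_add sO_mult sO_mult2)
qed (auto intro: OK_mult OhatD1)
lemma Ohat_smult: "c \<in> OK \<Longrightarrow> a \<in> Ohat K \<Longrightarrow> (\<lambda>n. c * a n) \<in> Ohat K"
  using Ohat_mult[OF Ohat_const] by blast
lemma Ohat_0 [simp]: "(\<lambda>n. 0) \<in> Ohat K" and Ohat_1 [simp]: "(\<lambda>n. 1) \<in> Ohat K"
  by (auto intro: Ohat_const)
lemma Ohat_nat [simp]: "(\<lambda>n. of_nat m) \<in> Ohat K"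
  by (auto intro: Ohat_const)

lemma ohat_eqI: "(\<And>n. n > 0 \<Longrightarrow> a n - b n \<in> scaleO K n) \<Longrightarrow> ohat_eq K a b"
  unfolding ohat_eq_def by blast
lemma ohat_eqD: "ohat_eq K a b \<Longrightarrow> n > 0 \<Longrightarrow> a n - b n \<in> scaleO K n"
  unfolding ohat_eq_def by blast
lemma ohat_eq_exact: "(\<And>n. n > 0 \<Longrightarrow> a n = b n) \<Longrightarrow> ohat_eq K a b"
  by (rule ohat_eqI) simp
lemma ohat_eq_refl [simp]: "ohat_eq K a a"
  by (rule ohat_eq_exact) simp
lemma ohat_eq_sym: "ohat_eq K a b \<Longrightarrow> ohat_eq K b a"
  unfolding ohat_eq_def by (metis minus_diff_eq sO_uminus)
lemma ohat_eq_trans: "ohat_eq K a b \<Longrightarrow> ohat_eq K b c \<Longrightarrow> ohat_eq K a c"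
  unfolding ohat_eq_def by (metis diff_add_cancel add_diff_eq sO_add)
lemma ohat_eq_add: "ohat_eq K a a' \<Longrightarrow> ohat_eq K b b' \<Longrightarrow> ohat_eq K (\<lambda>n. a n + b n) (\<lambda>n. a' n + b' n)"
  unfolding ohat_eq_def by (auto simp: add_diff_add sO_add)
lemma ohat_eq_uminus: "ohat_eq K a a' \<Longrightarrow> ohat_eq K (\<lambda>n. - a n) (\<lambda>n. - a' n)"
  unfolding ohat_eq_def by (metis minus_diff_minus sO_uminus)
lemma ohat_eq_diff: "ohat_eq K a a' \<Longrightarrow> ohat_eq K b b' \<Longrightarrow> ohat_eq K (\<lambda>n. a n - b n) (\<lambda>n. a' n - b' n)"
  using ohat_eq_add[of a a' "\<lambda>n. - b n" "\<lambda>n. - b' n"] ohat_eq_uminus[of b b'] by simp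
lemma ohat_eq_smult: "c \<in> OK \<Longrightarrow> ohat_eq K a a' \<Longrightarrow> ohat_eq K (\<lambda>n. c * a n) (\<lambda>n. c * a' n)"
  unfolding ohat_eq_def by (metis right_diff_distrib sO_mult)
lemma ohat_eq_mult:
  assumes "a' \<in> Ohat K" "b \<in> Ohat K" "ohat_eq K a a'" "ohat_eq K b b'"
  shows "ohat_eq K (\<lambda>n. a n * b n) (\<lambda>n. a' n * b' n)"
proof (rule ohat_eqI)
  fix n :: nat assume n: "n > 0"
  have "a n * b n - a' n * b' n = (a n - a' n) * b n + a' n * (b n - b' n)" by (simp add: algebra_simps)
  thus "a n * b n - a' n * b' n \<in> scaleO K n"
    using assms n by (metis OhatD1 ohat_eqD sO_add sO_mult sO_mult2)
qed
lemma ohat_eq_0_iff: "ohat_eq K a b \<longleftrightarrow> ohat_eq K (\<lambda>n. a n - b n) (\<lambda>n. 0)"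
  unfolding ohat_eq_def by simp

lemma ohat_cancel0:
  assumes a: "a \<in> Ohat K" and D: "D > 0" and h: "ohat_eq K (\<lambda>n. of_nat D * a n) (\<lambda>n. 0)"
  shows "ohat_eq K a (\<lambda>n. 0)"
proof (rule ohat_eqI)
  fix n :: nat assume n: "n > 0"
  have "of_nat D * a (D * n) \<in> scaleO K (D * n)" using ohat_eqD[OF h, of "D*n"] n D by simp
  hence 1: "a (D * n) \<in> scaleO K n" using sO_cancel n D by blast
  have 2: "a (D * n) - a n \<in> scaleO K n" using OhatD2[OF a n, of "D*n"] n D by simp
  have "a n = a (D * n) - (a (D * n) - a n)" by simp
  thus "a n - 0 \<in> scaleO K n" using 1 2 sO_diff n by (metis diff_zero)
qed

lemma ohat_cancel:
  assumes "a \<in> Ohat K" "b \<in> Ohat K" "D > 0" "ohat_eq K (\<lambda>n. of_nat D * a n) (\<lambda>n. of_nat D * b n)"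
  shows "ohat_eq K a b"
proof -
  have "ohat_eq K (\<lambda>n. of_nat D * (a n - b n)) (\<lambda>n. 0)"
    using assms(4) unfolding ohat_eq_def by (simp add: algebra_simps)
  hence "ohat_eq K (\<lambda>n. a n - b n) (\<lambda>n. 0)" using ohat_cancel0[OF Ohat_diff[OF assms(1,2)] assms(3)] by simp
  thus ?thesis using ohat_eq_0_iff by blast
qed

lemma ohat_alldiv:
  assumes "\<And>m. m > 0 \<Longrightarrow> \<exists>\<delta>\<in>Ohat K. ohat_eq K a (\<lambda>n. of_nat m * \<delta> n)"
  shows "ohat_eq K a (\<lambda>n. 0)"
proof (rule ohat_eqI)
  fix n :: nat assume n: "n > 0"
  obtain \<delta> where d: "\<delta> \<in> Ohat K" "ohat_eq K a (\<lambda>k. of_nat n * \<delta> k)" using assms n by blast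
  have "a n - of_nat n * \<delta> n \<in> scaleO K n" using ohat_eqD[OF d(2) n] by simp
  moreover have "of_nat n * \<delta> n \<in> scaleO K n" using sO_of_OK[OF n OhatD1[OF d(1) n]] .
  ultimately show "a n - 0 \<in> scaleO K n" using sO_add[OF n] by fastforce
qed

lemma ohat_approx:
  fixes M :: nat
  assumes a: "a \<in> Ohat K" and M: "M > 0"
  obtains c \<beta> where "c \<in> OK" "\<beta> \<in> Ohat K" "ohat_eq K a (\<lambda>n. c + of_nat M * \<beta> n)"
proof -
  define \<beta> where "\<beta> = (\<lambda>n::nat. (a (M * n) - a M) / of_nat M)"
  have "\<beta> \<in> Ohat K"
  proof (rule OhatI)
    fix n :: nat assume n: "n > 0"
    have "a (M * n) - a M \<in> scaleO K M" using OhatD2[OF a M, of "M*n"] n M by simp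
    thus "\<beta> n \<in> OK" unfolding \<beta>_def using M by (simp add: mem_scaleO)
  next
    fix n m :: nat assume nm: "n > 0" "m > 0" "n dvd m"
    have "a (M * m) - a (M * n) \<in> scaleO K (M * n)"
      using OhatD2[OF a, of "M*n" "M*m"] nm M by simp
    moreover have "\<beta> m - \<beta> n = (a (M * m) - a (M * n)) / of_nat M"
      unfolding \<beta>_def using M by (simp add: field_simps)
    ultimately show "\<beta> m - \<beta> n \<in> scaleO K n" using M nm by (simp add: mem_scaleO)
  qed
  moreover have "ohat_eq K a (\<lambda>n. a M + of_nat M * \<beta> n)"
  proof (rule ohat_eqI)
    fix n :: nat assume n: "n > 0"
    have "a n - (a M + of_nat M * \<beta> n) = - (a (M * n) - a n)" unfolding \<beta>_def using M by simp
    moreover have "- (a (M * n) - a n) \<in> scaleO K n"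
      using OhatD2[OF a n, of "M*n"] n M sO_uminus by (metis dvd_triv_right nat_0_less_mult_iff)
    ultimately show "a n - (a M + of_nat M * \<beta> n) \<in> scaleO K n" by metis
  qed
  ultimately show ?thesis using that OhatD1[OF a M] by blast
qed

end

context iqf begin

lemma ohat_comb:
  assumes a: "a \<in> Ohat K" and b: "b \<in> Ohat K" and D: "D > 0"
    and c: "ca \<in> Ohat K" "cb \<in> Ohat K" "cc \<in> Ohat K"
    and h: "ohat_eq K ua va" "ohat_eq K ub vb" "ohat_eq K uc vc"
    and e: "\<And>n. n > 0 \<Longrightarrow> of_nat D * (a n - b n) = ca n * (ua n - va n) + cb n * (ub n - vb n) + cc n * (uc n - vc n)"
  shows "ohat_eq K a b"
proof -
  have "ohat_eq K (\<lambda>n. of_nat D * (a n - b n)) (\<lambda>n. 0)"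
  proof (rule ohat_eqI)
    fix n :: nat assume n: "n > 0"
    have "ca n * (ua n - va n) \<in> scaleO K n" using sO_mult[OF n ohat_eqD[OF h(1) n] OhatD1[OF c(1) n]] .
    moreover have "cb n * (ub n - vb n) \<in> scaleO K n" using sO_mult[OF n ohat_eqD[OF h(2) n] OhatD1[OF c(2) n]] .
    moreover have "cc n * (uc n - vc n) \<in> scaleO K n" using sO_mult[OF n ohat_eqD[OF h(3) n] OhatD1[OF c(3) n]] .
    ultimately show "of_nat D * (a n - b n) - 0 \<in> scaleO K n" using e[OF n] sO_add[OF n] by simp
  qed
  hence "ohat_eq K (\<lambda>n. a n - b n) (\<lambda>n. 0)" using ohat_cancel0[OF Ohat_diff[OF a b] D] by simp
  thus ?thesis using ohat_eq_0_iff by blast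
qed

lemma AfI [intro]: "D > 0 \<Longrightarrow> a \<in> Ohat K \<Longrightarrow> (D, a) \<in> Af K"
  unfolding Af_def by blast
lemma AfE: assumes "x \<in> Af K" obtains D a where "x = (D, a)" "D > 0" "a \<in> Ohat K"
  using assms unfolding Af_def by blast
lemma Af_iff: "(D, a) \<in> Af K \<longleftrightarrow> D > 0 \<and> a \<in> Ohat K"
  unfolding Af_def by blast

lemma Af_mult [simp, intro]: "x \<in> Af K \<Longrightarrow> y \<in> Af K \<Longrightarrow> fa_mult x y \<in> Af K"
  by (auto elim!: AfE simp: fa_mult_def intro!: Ohat_mult)
lemma Af_add [simp, intro]: "x \<in> Af K \<Longrightarrow> y \<in> Af K \<Longrightarrow> fa_add x y \<in> Af K"
  by (auto elim!: AfE simp: fa_add_def intro!: Ohat_add Ohat_smult)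
lemma Af_neg [simp, intro]: "x \<in> Af K \<Longrightarrow> fa_neg x \<in> Af K"
  by (auto elim!: AfE simp: fa_neg_def intro!: Ohat_uminus)
lemma Af_ohat [simp, intro]: "a \<in> Ohat K \<Longrightarrow> fa_of_ohat a \<in> Af K"
  by (auto simp: fa_of_ohat_def)

lemma fa_eq_iff: "fa_eq K (D, a) (E, b) \<longleftrightarrow> ohat_eq K (\<lambda>n. of_nat E * a n) (\<lambda>n. of_nat D * b n)"
  unfolding fa_eq_def by simp

lemma fa_eq_exact: "(\<And>n. n > 0 \<Longrightarrow> of_nat (fst y) * snd x n = of_nat (fst x) * snd y n) \<Longrightarrow> fa_eq K x y"
  unfolding fa_eq_def by (rule ohat_eq_exact) simp

lemma fa_eq_refl [simp]: "fa_eq K x x"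
  by (rule fa_eq_exact) simp

lemma fa_eq_sym: "fa_eq K x y \<Longrightarrow> fa_eq K y x"
  unfolding fa_eq_def by (rule ohat_eq_sym)

lemma fa_eq_trans:
  assumes "x \<in> Af K" "y \<in> Af K" "z \<in> Af K" "fa_eq K x y" "fa_eq K y z"
  shows "fa_eq K x z"
proof -
  obtain Dx a where x: "x = (Dx, a)" "Dx > 0" "a \<in> Ohat K" using assms(1) by (rule AfE)
  obtain Dy b where y: "y = (Dy, b)" "Dy > 0" "b \<in> Ohat K" using assms(2) by (rule AfE)
  obtain Dz c where z: "z = (Dz, c)" "Dz > 0" "c \<in> Ohat K" using assms(3) by (rule AfE)
  have h1: "ohat_eq K (\<lambda>n. of_nat Dy * a n) (\<lambda>n. of_nat Dx * b n)" using assms(4) x y by (simp add: fa_eq_iff)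
  have h2: "ohat_eq K (\<lambda>n. of_nat Dz * b n) (\<lambda>n. of_nat Dy * c n)" using assms(5) y z by (simp add: fa_eq_iff)
  have "ohat_eq K (\<lambda>n. of_nat Dz * a n) (\<lambda>n. of_nat Dx * c n)"
    by (rule ohat_comb[where ca = "\<lambda>n. of_nat Dz" and cb = "\<lambda>n. of_nat Dx" and cc = "\<lambda>n. 0", OF _ _ y(2) _ _ _ h1 h2 ohat_eq_refl])
       (use x y z in \<open>auto intro!: Ohat_smult simp: algebra_simps\<close>)
  thus ?thesis using x z by (simp add: fa_eq_iff)
qed

lemma fa_mult_cong:
  assumes "x \<in> Af K" "x' \<in> Af K" "y \<in> Af K" "y' \<in> Af K" "fa_eq K x x'" "fa_eq K y y'"
  shows "fa_eq K (fa_mult x y) (fa_mult x' y')"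
proof -
  obtain Dx a where x: "x = (Dx, a)" "Dx > 0" "a \<in> Ohat K" using assms(1) by (rule AfE)
  obtain Dx' a' where x': "x' = (Dx', a')" "Dx' > 0" "a' \<in> Ohat K" using assms(2) by (rule AfE)
  obtain Dy b where y: "y = (Dy, b)" "Dy > 0" "b \<in> Ohat K" using assms(3) by (rule AfE)
  obtain Dy' b' where y': "y' = (Dy', b')" "Dy' > 0" "b' \<in> Ohat K" using assms(4) by (rule AfE)
  have h1: "ohat_eq K (\<lambda>n. of_nat Dx' * a n) (\<lambda>n. of_nat Dx * a' n)" using assms(5) x x' by (simp add: fa_eq_iff)
  have h2: "ohat_eq K (\<lambda>n. of_nat Dy' * b n) (\<lambda>n. of_nat Dy * b' n)" using assms(6) y y' by (simp add: fa_eq_iff)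
  have "ohat_eq K (\<lambda>n. of_nat (Dx' * Dy') * (a n * b n)) (\<lambda>n. of_nat (Dx * Dy) * (a' n * b' n))"
    by (rule ohat_comb[where D = 1 and ca = "\<lambda>n. of_nat Dy' * b n" and cb = "\<lambda>n. of_nat Dx * a' n" and cc = "\<lambda>n. 0", OF _ _ _ _ _ _ h1 h2 ohat_eq_refl])
       (use x x' y y' in \<open>auto intro!: Ohat_smult Ohat_mult simp: algebra_simps\<close>)
  thus ?thesis using x x' y y' by (simp add: fa_eq_iff fa_mult_def)
qed

lemma fa_add_cong:
  assumes "x \<in> Af K" "x' \<in> Af K" "y \<in> Af K" "y' \<in> Af K" "fa_eq K x x'" "fa_eq K y y'"
  shows "fa_eq K (fa_add x y) (fa_add x' y')"
proof -
  obtain Dx a where x: "x = (Dx, a)" "Dx > 0" "a \<in> Ohat K" using assms(1) by (rule AfE)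
  obtain Dx' a' where x': "x' = (Dx', a')" "Dx' > 0" "a' \<in> Ohat K" using assms(2) by (rule AfE)
  obtain Dy b where y: "y = (Dy, b)" "Dy > 0" "b \<in> Ohat K" using assms(3) by (rule AfE)
  obtain Dy' b' where y': "y' = (Dy', b')" "Dy' > 0" "b' \<in> Ohat K" using assms(4) by (rule AfE)
  have h1: "ohat_eq K (\<lambda>n. of_nat Dx' * a n) (\<lambda>n. of_nat Dx * a' n)" using assms(5) x x' by (simp add: fa_eq_iff)
  have h2: "ohat_eq K (\<lambda>n. of_nat Dy' * b n) (\<lambda>n. of_nat Dy * b' n)" using assms(6) y y' by (simp add: fa_eq_iff)
  have "ohat_eq K (\<lambda>n. of_nat (Dx' * Dy') * (of_nat Dy * a n + of_nat Dx * b n))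
                  (\<lambda>n. of_nat (Dx * Dy) * (of_nat Dy' * a' n + of_nat Dx' * b' n))"
    by (rule ohat_comb[where D = 1 and ca = "\<lambda>n. of_nat (Dy' * Dy)" and cb = "\<lambda>n. of_nat (Dx * Dx')" and cc = "\<lambda>n. 0", OF _ _ _ _ _ _ h1 h2 ohat_eq_refl])
       (use x x' y y' in \<open>auto intro!: Ohat_smult Ohat_mult Ohat_add simp: algebra_simps\<close>)
  thus ?thesis using x x' y y' by (simp add: fa_eq_iff fa_add_def)
qed

lemma fa_neg_cong:
  assumes "fa_eq K x x'"
  shows "fa_eq K (fa_neg x) (fa_neg x')"
  using ohat_eq_uminus[OF assms[unfolded fa_eq_def]] unfolding fa_eq_def fa_neg_def by simp

lemma fa_ohat_cong: "ohat_eq K a b \<Longrightarrow> fa_eq K (fa_of_ohat a) (fa_of_ohat b)"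
  by (simp add: fa_eq_def fa_of_ohat_def)

lemma fa_mult_comm: "fa_mult x y = fa_mult y x"
  by (simp add: fa_mult_def mult.commute)
lemma fa_mult_assoc: "fa_mult (fa_mult x y) z = fa_mult x (fa_mult y z)"
  by (simp add: fa_mult_def mult.assoc)
lemma fa_mult_lcomm: "fa_mult x (fa_mult y z) = fa_mult y (fa_mult x z)"
  by (simp add: fa_mult_def mult.left_commute)
lemmas fa_mult_ac = fa_mult_comm fa_mult_assoc fa_mult_lcomm
lemma fa_add_comm: "fa_add x y = fa_add y x"
  by (simp add: fa_add_def add.commute mult.commute)
lemma fa_add_assoc: "fa_add (fa_add x y) z = fa_add x (fa_add y z)"
  by (simp add: fa_add_def algebra_simps)
lemma fa_add_lcomm: "fa_add x (fa_add y z) = fa_add y (fa_add x z)"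
  by (simp add: fa_add_def algebra_simps)
lemmas fa_add_ac = fa_add_comm fa_add_assoc fa_add_lcomm

lemma fa_distrib: "fa_eq K (fa_mult x (fa_add y z)) (fa_add (fa_mult x y) (fa_mult x z))"
  by (rule fa_eq_exact) (simp add: fa_mult_def fa_add_def algebra_simps)
lemma fa_mult_neg: "fa_mult x (fa_neg y) = fa_neg (fa_mult x y)"
  by (simp add: fa_mult_def fa_neg_def)
lemma fa_neg_add: "fa_eq K (fa_neg (fa_add x y)) (fa_add (fa_neg x) (fa_neg y))"
  by (rule fa_eq_exact) (simp add: fa_neg_def fa_add_def algebra_simps)
lemma fa_mult_1: "fa_eq K (fa_mult (1, \<lambda>n. 1) x) x"
  by (rule fa_eq_exact) (simp add: fa_mult_def)
lemma fa_add_0: "fa_eq K (fa_add (1, \<lambda>n. 0) x) x"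
  by (rule fa_eq_exact) (simp add: fa_add_def)
lemma fa_add_neg: "fa_eq K (fa_add x (fa_neg x)) (1, \<lambda>n. 0)"
  by (rule fa_eq_exact) (simp add: fa_add_def fa_neg_def)
lemma fa_ohat_mult: "fa_mult (fa_of_ohat a) (fa_of_ohat b) = fa_of_ohat (\<lambda>n. a n * b n)"
  by (simp add: fa_mult_def fa_of_ohat_def)
lemma fa_ohat_add: "fa_eq K (fa_add (fa_of_ohat a) (fa_of_ohat b)) (fa_of_ohat (\<lambda>n. a n + b n))"
  by (rule fa_eq_exact) (simp add: fa_add_def fa_of_ohat_def)
lemma fa_ohat_neg: "fa_neg (fa_of_ohat a) = fa_of_ohat (\<lambda>n. - a n)"
  by (simp add: fa_neg_def fa_of_ohat_def)

end

definition val :: "fadele \<Rightarrow> nat \<Rightarrow> complex" where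
  "val x n = snd x n / of_nat (fst x)"

context iqf begin

definition isZ where "isZ x \<longleftrightarrow> x \<in> Af K \<and> fa_eq K x (1, \<lambda>n. 0)"

lemma val_pair [simp]: "val (D, a) n = a n / of_nat D" by (simp add: val_def)
lemma val_mult [simp]: "fst x > 0 \<Longrightarrow> fst y > 0 \<Longrightarrow> val (fa_mult x y) n = val x n * val y n"
  by (simp add: val_def fa_mult_def)
lemma val_add [simp]: "fst x > 0 \<Longrightarrow> fst y > 0 \<Longrightarrow> val (fa_add x y) n = val x n + val y n"
  by (simp add: val_def fa_add_def field_simps)
lemma val_neg [simp]: "val (fa_neg x) n = - val x n"
  by (simp add: val_def fa_neg_def)
lemma val_ohat [simp]: "val (fa_of_ohat a) n = a n"
  by (simp add: val_def fa_of_ohat_def)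
lemma fst_Af: "x \<in> Af K \<Longrightarrow> fst x > 0" by (auto elim: AfE)
lemma fst_ops [simp]: "fst (fa_mult x y) = fst x * fst y" "fst (fa_add x y) = fst x * fst y"
  "fst (fa_neg x) = fst x" "fst (fa_of_ohat a) = 1"
  by (simp_all add: fa_mult_def fa_add_def fa_neg_def fa_of_ohat_def)

lemma fa_eq_val: "fst x > 0 \<Longrightarrow> fst y > 0 \<Longrightarrow> (\<And>n. n > 0 \<Longrightarrow> val x n = val y n) \<Longrightarrow> fa_eq K x y"
  by (rule fa_eq_exact) (auto simp: val_def field_simps)

lemma fa_of_K_rep:
  assumes "k \<in> K"
  obtains d where "d > 0" "of_nat d * k \<in> OK" "fa_of_K K k = (d, \<lambda>n. of_nat d * k)"
proof -
  have ex: "\<exists>d::nat. d > 0 \<and> of_nat d * k \<in> OK" using K_denom[OF assms] by blast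
  define d where "d = (LEAST d::nat. d > 0 \<and> of_nat d * k \<in> OK)"
  have "d > 0 \<and> of_nat d * k \<in> OK" unfolding d_def by (rule LeastI_ex[OF ex])
  moreover have "fa_of_K K k = (d, \<lambda>n. of_nat d * k)" unfolding fa_of_K_def d_def Let_def by simp
  ultimately show ?thesis using that by blast
qed

lemma Af_K [simp, intro]: "k \<in> K \<Longrightarrow> fa_of_K K k \<in> Af K"
  by (erule fa_of_K_rep) (auto intro: Ohat_const)
lemma val_K [simp]: "k \<in> K \<Longrightarrow> val (fa_of_K K k) n = k"
  by (erule fa_of_K_rep) simp

lemma isZ_iff: "isZ (D, a) \<longleftrightarrow> D > 0 \<and> a \<in> Ohat K \<and> ohat_eq K a (\<lambda>n. 0)"
  unfolding isZ_def by (simp add: Af_iff fa_eq_iff)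

lemma isZ_Af: "isZ x \<Longrightarrow> x \<in> Af K" by (simp add: isZ_def)

lemma isZ_0 [simp]: "isZ (1, \<lambda>n. 0)" by (simp add: isZ_iff)
lemma zero_Af [simp]: "(1, \<lambda>n. 0) \<in> Af K" by auto

lemma isZ_add: assumes "isZ x" "isZ y" shows "isZ (fa_add x y)"
proof -
  obtain D a where x: "x = (D, a)" "D > 0" "a \<in> Ohat K" "ohat_eq K a (\<lambda>n. 0)"
    using assms(1) by (metis isZ_iff surj_pair)
  obtain E b where y: "y = (E, b)" "E > 0" "b \<in> Ohat K" "ohat_eq K b (\<lambda>n. 0)"
    using assms(2) by (metis isZ_iff surj_pair)
  have "ohat_eq K (\<lambda>n. of_nat E * a n + of_nat D * b n) (\<lambda>n. of_nat E * 0 + of_nat D * 0)"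
    by (intro ohat_eq_add ohat_eq_smult) (use x y in auto)
  thus ?thesis using x y by (simp add: isZ_iff fa_add_def Ohat_add Ohat_smult)
qed

lemma isZ_mult: assumes "c \<in> Af K" "isZ x" shows "isZ (fa_mult c x)"
proof -
  obtain D a where x: "x = (D, a)" "D > 0" "a \<in> Ohat K" "ohat_eq K a (\<lambda>n. 0)"
    using assms(2) by (metis isZ_iff surj_pair)
  obtain E b where c: "c = (E, b)" "E > 0" "b \<in> Ohat K" using assms(1) by (rule AfE)
  have "ohat_eq K (\<lambda>n. b n * a n) (\<lambda>n. b n * 0)"
    by (rule ohat_eq_mult) (use x c in auto)
  thus ?thesis using x c by (simp add: isZ_iff fa_mult_def Ohat_mult)
qed

lemma isZ_neg: assumes "isZ x" shows "isZ (fa_neg x)"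
proof -
  obtain D a where x: "x = (D, a)" "D > 0" "a \<in> Ohat K" "ohat_eq K a (\<lambda>n. 0)"
    using assms(1) by (metis isZ_iff surj_pair)
  show ?thesis using x ohat_eq_uminus[OF x(4)] by (simp add: isZ_iff fa_neg_def Ohat_uminus)
qed

lemma isZ_val: assumes "isZ x" "y \<in> Af K" "\<And>n. n > 0 \<Longrightarrow> val y n = val x n" shows "isZ y"
proof -
  have "fa_eq K y x" using assms by (intro fa_eq_val) (auto simp: fst_Af isZ_def)
  thus ?thesis using assms fa_eq_trans[of y x "(1, \<lambda>n. 0)"] zero_Af by (auto simp: isZ_def)
qed

lemma fa_eq_isZ: assumes "x \<in> Af K" "y \<in> Af K" shows "fa_eq K x y \<longleftrightarrow> isZ (fa_add x (fa_neg y))"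
proof -
  obtain D a where x: "x = (D, a)" "D > 0" "a \<in> Ohat K" using assms(1) by (rule AfE)
  obtain E b where y: "y = (E, b)" "E > 0" "b \<in> Ohat K" using assms(2) by (rule AfE)
  have m: "(\<lambda>n. of_nat E * a n - of_nat D * b n) \<in> Ohat K"
    using x y by (intro Ohat_diff Ohat_smult) auto
  show ?thesis using x y m
    by (simp add: isZ_iff fa_add_def fa_neg_def fa_eq_iff
        ohat_eq_0_iff[of "\<lambda>n. of_nat E * a n"])
qed

lemma isZ_comb:
  assumes "isZ za" "isZ zb" "isZ zc" "isZ zd" "isZ ze"
    "ca \<in> Af K" "cb \<in> Af K" "cc \<in> Af K" "cd \<in> Af K" "ce \<in> Af K" "T \<in> Af K"
    "\<And>n. n > 0 \<Longrightarrow> val T n = val ca n * val za n + val cb n * val zb n + val cc n * val zc n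
         + val cd n * val zd n + val ce n * val ze n"
  shows "isZ T"
proof -
  let ?S = "fa_add (fa_mult ca za) (fa_add (fa_mult cb zb) (fa_add (fa_mult cc zc) (fa_add (fa_mult cd zd) (fa_mult ce ze))))"
  have Z: "isZ ?S" using assms by (intro isZ_add isZ_mult) auto
  show ?thesis
    by (rule isZ_val[OF Z assms(11)]) (use assms in \<open>auto simp: fst_Af isZ_def algebra_simps\<close>)
qed

lemma one_Af [simp]: "(1, \<lambda>n. 1) \<in> Af K" by auto
lemma val_one [simp]: "val (1, \<lambda>n. 1) n = 1" by simp

lemma inS_I: "sf \<in> Af K \<Longrightarrow> y \<in> Af K \<Longrightarrow> \<beta> \<in> Ohat K \<Longrightarrow> isZ (fa_add y (fa_neg (fa_mult sf (fa_of_ohat \<beta>)))) \<Longrightarrow> in_sOhat K sf y"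
  unfolding in_sOhat_def by (subst (asm) fa_eq_isZ[symmetric]) auto
lemma inS_E: assumes "in_sOhat K sf y" "sf \<in> Af K" "y \<in> Af K"
  obtains \<beta> where "\<beta> \<in> Ohat K" "isZ (fa_add y (fa_neg (fa_mult sf (fa_of_ohat \<beta>))))"
proof -
  obtain \<beta> where b: "\<beta> \<in> Ohat K" "fa_eq K y (fa_mult sf (fa_of_ohat \<beta>))"
    using assms(1) unfolding in_sOhat_def by blast
  have "fa_mult sf (fa_of_ohat \<beta>) \<in> Af K" using b assms by auto
  thus ?thesis using that b fa_eq_isZ assms by blast
qed

lemma inS_unit: assumes "sf \<in> Af_units K"
  obtains E where "E > 0" "in_sOhat K sf (fa_of_ohat (\<lambda>n. of_nat E))"
proof -
  obtain y where y: "y \<in> Af K" "sf \<in> Af K" "fa_eq K (fa_mult sf y) (1, \<lambda>n. 1)"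
    using assms unfolding Af_units_def by blast
  obtain D a where s: "sf = (D, a)" "D > 0" "a \<in> Ohat K" using y(2) by (rule AfE)
  obtain E b where yy: "y = (E, b)" "E > 0" "b \<in> Ohat K" using y(1) by (rule AfE)
  have h: "ohat_eq K (\<lambda>n. a n * b n) (\<lambda>n. of_nat (D * E))" using y(3) s yy by (simp add: fa_mult_def fa_eq_iff)
  have "fa_eq K (fa_of_ohat (\<lambda>n. of_nat E)) (fa_mult sf (fa_of_ohat b))"
    using ohat_eq_sym[OF h] s by (simp add: fa_eq_iff fa_of_ohat_def fa_mult_def algebra_simps)
  hence "in_sOhat K sf (fa_of_ohat (\<lambda>n. of_nat E))" unfolding in_sOhat_def using yy by blast
  thus ?thesis using that yy by blast
qed

lemma Af_units_Af: "sf \<in> Af_units K \<Longrightarrow> sf \<in> Af K" by (simp add: Af_units_def)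

lemma Af_approx:
  assumes u: "u \<in> Af K" and M: "M > 0"
  obtains l \<delta> where "l \<in> K" "\<delta> \<in> Ohat K"
    "isZ (fa_add (fa_of_K K l) (fa_neg (fa_add u (fa_of_ohat (\<lambda>n. of_nat M * \<delta> n)))))"
proof -
  obtain D \<gamma> where uu: "u = (D, \<gamma>)" "D > 0" "\<gamma> \<in> Ohat K" using u by (rule AfE)
  obtain c \<beta> where cb: "c \<in> OK" "\<beta> \<in> Ohat K" "ohat_eq K \<gamma> (\<lambda>n. c + of_nat (D * M) * \<beta> n)"
    using ohat_approx[OF uu(3), of "D * M"] uu M by auto
  define \<delta> where "\<delta> = (\<lambda>n. - \<beta> n)"
  have d: "\<delta> \<in> Ohat K" unfolding \<delta>_def using cb by (simp add: Ohat_uminus)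
  have l: "c / of_nat D \<in> K" using cb(1) OK_K K_divide by simp
  have m: "(\<lambda>n. \<gamma> n - (c + of_nat (D * M) * \<beta> n)) \<in> Ohat K"
    using uu cb OK_of_nat[of "D*M"] by (intro Ohat_diff Ohat_add Ohat_smult Ohat_const) (auto simp del: of_nat_mult)
  have Zc: "isZ (D, \<lambda>n. \<gamma> n - (c + of_nat (D * M) * \<beta> n))"
    using uu cb m by (simp add: isZ_iff Ohat_diff Ohat_add Ohat_const Ohat_smult flip: ohat_eq_0_iff)
  have "isZ (fa_add (fa_of_K K (c / of_nat D)) (fa_neg (fa_add u (fa_of_ohat (\<lambda>n. of_nat M * \<delta> n)))))"
  proof (rule isZ_comb[OF Zc isZ_0 isZ_0 isZ_0 isZ_0 _ one_Af one_Af one_Af one_Af])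
    show "(1, \<lambda>n. -1) \<in> Af K" by (rule AfI) (auto intro!: Ohat_const OK_uminus)
    show "fa_add (fa_of_K K (c / of_nat D)) (fa_neg (fa_add u (fa_of_ohat (\<lambda>n. of_nat M * \<delta> n)))) \<in> Af K"
      using l u d by (auto intro!: Af_add Af_neg Af_ohat Ohat_smult)
  qed (use l uu in \<open>auto simp: fst_Af \<delta>_def field_simps\<close>)
  thus ?thesis using that l d by blast
qed

end

context iqf begin

lemma fst_K [simp]: "k \<in> K \<Longrightarrow> fst (fa_of_K K k) > 0"
  using fst_Af[OF Af_K] by blast

lemma snd_Af: "x \<in> Af K \<Longrightarrow> snd x \<in> Ohat K" by (auto elim: AfE)

lemma inS_val:
  assumes "in_sOhat K sf y" "sf \<in> Af K" "y \<in> Af K" "y' \<in> Af K" "\<And>n. n > 0 \<Longrightarrow> val y' n = val y n"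
  shows "in_sOhat K sf y'"
proof -
  obtain \<beta> where b: "\<beta> \<in> Ohat K" "isZ (fa_add y (fa_neg (fa_mult sf (fa_of_ohat \<beta>))))"
    using inS_E[OF assms(1-3)] by blast
  have "isZ (fa_add y' (fa_neg (fa_mult sf (fa_of_ohat \<beta>))))"
    by (rule isZ_val[OF b(2)]) (use assms b in \<open>auto simp: fst_Af\<close>)
  thus ?thesis using inS_I assms b by blast
qed

lemma Lambda_mem: "l \<in> Lambda K (sf, z) \<longleftrightarrow> (\<exists>k. k \<in> K \<and> in_sOhat K sf (fa_of_K K k) \<and> l = k / z)"
  unfolding Lambda_def by auto

lemma Kspan_Lambda:
  assumes sf: "sf \<in> Af_units K" and z: "z \<noteq> 0"
  shows "Kspan K (Lambda K (sf, z)) = (\<lambda>k. k / z) ` K"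
proof
  show "Kspan K (Lambda K (sf, z)) \<subseteq> (\<lambda>k. k / z) ` K"
  proof
    fix t assume "t \<in> Kspan K (Lambda K (sf, z))"
    then obtain k l where "k \<in> K" "l \<in> Lambda K (sf, z)" "t = k * l" unfolding Kspan_def by blast
    then obtain k' where "k' \<in> K" "t = k * (k' / z)" by (auto simp: Lambda_mem)
    thus "t \<in> (\<lambda>k. k / z) ` K" using \<open>k \<in> K\<close> by (auto simp: image_iff intro!: bexI[of _ "k * k'"] K_mult)
  qed
next
  show "(\<lambda>k. k / z) ` K \<subseteq> Kspan K (Lambda K (sf, z))"
  proof
    fix t assume "t \<in> (\<lambda>k. k / z) ` K"
    then obtain k where k: "k \<in> K" "t = k / z" by blast
    obtain E where E: "E > 0" "in_sOhat K sf (fa_of_ohat (\<lambda>n. of_nat E))" using inS_unit[OF sf] by blast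
    have "in_sOhat K sf (fa_of_K K (of_nat E))"
      by (rule inS_val[OF E(2)]) (use sf in \<open>auto simp: Af_units_Af\<close>)
    hence "of_nat E / z \<in> Lambda K (sf, z)" unfolding Lambda_mem by (intro exI[of _ "of_nat E"]) auto
    moreover have "k / of_nat E \<in> K" using k by (simp add: K_divide)
    moreover have "t = (k / of_nat E) * (of_nat E / z)" using E k by simp
    ultimately show "t \<in> Kspan K (Lambda K (sf, z))" unfolding Kspan_def by blast
  qed
qed

lemma phi_exists:
  assumes sf: "sf \<in> Af_units K" and rho: "\<rho> \<in> Ohat K" and x: "x \<in> K"
  obtains k where "k \<in> K" "in_sOhat K sf (fa_add (fa_of_K K k) (fa_neg (fa_mult (fa_mult sf (fa_of_ohat \<rho>)) (fa_of_K K x))))"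
proof -
  have sfA: "sf \<in> Af K" using sf by (rule Af_units_Af)
  obtain E where E: "E > 0" "in_sOhat K sf (fa_of_ohat (\<lambda>n. of_nat E))" using inS_unit[OF sf] by blast
  obtain \<gamma> where g: "\<gamma> \<in> Ohat K" "isZ (fa_add (fa_of_ohat (\<lambda>n. of_nat E)) (fa_neg (fa_mult sf (fa_of_ohat \<gamma>))))"
    using inS_E[OF E(2) sfA] by auto
  define u where "u = fa_mult (fa_mult sf (fa_of_ohat \<rho>)) (fa_of_K K x)"
  have u: "u \<in> Af K" unfolding u_def using sfA rho x by auto
  obtain l \<delta> where l: "l \<in> K" "\<delta> \<in> Ohat K"
    "isZ (fa_add (fa_of_K K l) (fa_neg (fa_add u (fa_of_ohat (\<lambda>n. of_nat E * \<delta> n)))))"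
    using Af_approx[OF u E(1)] by blast
  have "in_sOhat K sf (fa_add (fa_of_K K l) (fa_neg u))"
  proof (rule inS_I[where \<beta> = "\<lambda>n. \<delta> n * \<gamma> n"])
    show "isZ (fa_add (fa_add (fa_of_K K l) (fa_neg u)) (fa_neg (fa_mult sf (fa_of_ohat (\<lambda>n. \<delta> n * \<gamma> n)))))"
        by (rule isZ_comb[OF l(3) g(2) isZ_0 isZ_0 isZ_0 one_Af Af_ohat[OF l(2)] one_Af one_Af one_Af])
         (use sfA u l g in \<open>auto simp: fst_Af algebra_simps intro!: Ohat_mult Af_add Af_neg Af_mult Af_ohat\<close>)
  qed (use sfA u l g in \<open>auto intro!: Ohat_mult Af_add Af_neg Af_mult Af_ohat\<close>)
  thus ?thesis using that l unfolding u_def by blast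
qed

lemma isZ_alldiv:
  assumes T: "T \<in> Af K" and N: "N > 0"
    and h: "\<And>m. m > 0 \<Longrightarrow> \<exists>\<delta>\<in>Ohat K. fa_eq K (fa_mult T (fa_of_K K (1 / of_nat m))) (N, \<delta>)"
  shows "isZ T"
proof -
  obtain E \<alpha> where TT: "T = (E, \<alpha>)" "E > 0" "\<alpha> \<in> Ohat K" using T by (rule AfE)
  have "ohat_eq K (\<lambda>n. of_nat N * \<alpha> n) (\<lambda>n. 0)"
  proof (rule ohat_alldiv)
    fix m :: nat assume m: "m > 0"
    have mK: "1 / of_nat m \<in> K" by (simp add: K_divide)
    obtain \<delta> where d: "\<delta> \<in> Ohat K" "fa_eq K (fa_mult T (fa_of_K K (1 / of_nat m))) (N, \<delta>)" using h[OF m] by blast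
    have 1: "fa_eq K (E * m, \<alpha>) (fa_mult T (fa_of_K K (1 / of_nat m)))"
      by (rule fa_eq_val) (use TT m mK in auto)
    have "fa_eq K (E * m, \<alpha>) (N, \<delta>)"
        by (rule fa_eq_trans[OF _ _ _ 1 d(2)]) (use TT m T N d mK in \<open>auto intro!: Af_mult Af_K\<close>)
    hence "ohat_eq K (\<lambda>n. of_nat N * \<alpha> n) (\<lambda>n. of_nat m * (of_nat E * \<delta> n))"
      by (simp add: fa_eq_iff algebra_simps)
    thus "\<exists>\<delta>\<in>Ohat K. ohat_eq K (\<lambda>n. of_nat N * \<alpha> n) (\<lambda>n. of_nat m * \<delta> n)"
      using d(1) by (intro bexI[of _ "\<lambda>n. of_nat E * \<delta> n"] Ohat_smult) auto
  qed
  hence "ohat_eq K \<alpha> (\<lambda>n. 0)" by (rule ohat_cancel0[OF TT(3) N])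
  thus ?thesis using TT by (simp add: isZ_iff)
qed

end

context iqf begin

lemma OK_nat_mult [simp]: "(of_nat a * of_nat b :: complex) \<in> OK"
  by (metis OK_of_nat of_nat_mult)

lemma Af_const [intro]: "c \<in> OK \<Longrightarrow> (1, \<lambda>n. c) \<in> Af K"
  by (auto intro: Ohat_const)

lemma comm_if_modK:
  assumes rho: "\<rho> \<in> Ohat K" and sf: "sf \<in> Af_units K" and z: "z \<noteq> 0"
    and rho': "\<rho>' \<in> Ohat K" and sf': "sf' \<in> Af_units K" and z': "z' \<noteq> 0"
    and H: "modK_eq K (Theta (\<rho>, (sf, z))) (Theta (\<rho>', (sf', z')))"
  shows "commensurable K (\<rho>, (sf, z)) (\<rho>', (sf', z'))"
proof -
  have sfA: "sf \<in> Af K" and sfA': "sf' \<in> Af K" using sf sf' by (auto simp: Af_units_Af)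
  obtain k0 where k0: "k0 \<in> K" "k0 \<noteq> 0"
    and Hf: "fa_eq K (fa_mult (fa_of_ohat \<rho>') sf') (fa_mult (fa_of_K K k0) (fa_mult (fa_of_ohat \<rho>) sf))"
    and zz: "z' = k0 * z"
    using H unfolding modK_eq_def Theta_def by auto
  have HZ: "isZ (fa_add (fa_mult (fa_of_ohat \<rho>') sf') (fa_neg (fa_mult (fa_of_K K k0) (fa_mult (fa_of_ohat \<rho>) sf))))"
    using Hf fa_eq_isZ[of "fa_mult (fa_of_ohat \<rho>') sf'" "fa_mult (fa_of_K K k0) (fa_mult (fa_of_ohat \<rho>) sf)"]
      sfA sfA' rho rho' k0 by auto
  have span: "Kspan K (Lambda K (sf, z)) = Kspan K (Lambda K (sf', z'))"
  proof -
    have "(\<lambda>k. k / z) ` K = (\<lambda>k. k / z') ` K"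
    proof (intro equalityI subsetI)
      fix t assume "t \<in> (\<lambda>k. k / z) ` K"
      then obtain a where a: "a \<in> K" "t = a / z" by blast
      have "t = (a * k0) / z'" using a zz k0 z by simp
      thus "t \<in> (\<lambda>k. k / z') ` K" using a k0 K_mult by blast
    next
      fix t assume "t \<in> (\<lambda>k. k / z') ` K"
      then obtain a where a: "a \<in> K" "t = a / z'" by blast
      have "t = (a / k0) / z" using a zz k0 z by simp
      thus "t \<in> (\<lambda>k. k / z) ` K" using a k0 K_divide by blast
    qed
    thus ?thesis using Kspan_Lambda sf sf' z z' by simp
  qed
  have phi: "c1 - c2 \<in> setsum (Lambda K (sf, z)) (Lambda K (sf', z'))"
    if x: "x \<in> K" and p1: "phi_rep K \<rho> (sf, z) x c1" and p2: "phi_rep K \<rho>' (sf', z') x c2" for x c1 c2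
  proof -
    obtain k1 where k1: "k1 \<in> K" "c1 = k1 / z"
      "in_sOhat K sf (fa_add (fa_of_K K k1) (fa_neg (fa_mult (fa_mult sf (fa_of_ohat \<rho>)) (fa_of_K K x))))"
      using p1 unfolding phi_rep_def by auto
    obtain k2 where k2: "k2 \<in> K" "c2 = k2 / z'"
      "in_sOhat K sf' (fa_add (fa_of_K K k2) (fa_neg (fa_mult (fa_mult sf' (fa_of_ohat \<rho>')) (fa_of_K K x))))"
      using p2 unfolding phi_rep_def by auto
    obtain E1 where E1: "E1 > 0" "in_sOhat K sf (fa_of_ohat (\<lambda>n. of_nat E1))" using inS_unit[OF sf] by blast
    obtain E2 where E2: "E2 > 0" "in_sOhat K sf' (fa_of_ohat (\<lambda>n. of_nat E2))" using inS_unit[OF sf'] by blast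
    obtain e where e: "e > 0" "of_nat e * k0 \<in> OK" using K_denom[OF k0(1)] by blast
    define M where "M = E1 * E2 * e"
    have M: "M > 0" using E1 E2 e by (simp add: M_def)
    obtain \<gamma> where g: "\<gamma> \<in> Ohat K" "isZ (fa_add (fa_of_ohat (\<lambda>n. of_nat E1)) (fa_neg (fa_mult sf (fa_of_ohat \<gamma>))))"
      using inS_E[OF E1(2) sfA] by auto
    obtain \<gamma>' where g': "\<gamma>' \<in> Ohat K" "isZ (fa_add (fa_of_ohat (\<lambda>n. of_nat E2)) (fa_neg (fa_mult sf' (fa_of_ohat \<gamma>'))))"
      using inS_E[OF E2(2) sfA'] by auto
    obtain \<beta>1 where b1: "\<beta>1 \<in> Ohat K"
      "isZ (fa_add (fa_add (fa_of_K K k1) (fa_neg (fa_mult (fa_mult sf (fa_of_ohat \<rho>)) (fa_of_K K x))))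
              (fa_neg (fa_mult sf (fa_of_ohat \<beta>1))))"
      using inS_E[OF k1(3) sfA] sfA rho x k1 by auto
    obtain \<beta>2 where b2: "\<beta>2 \<in> Ohat K"
      "isZ (fa_add (fa_add (fa_of_K K k2) (fa_neg (fa_mult (fa_mult sf' (fa_of_ohat \<rho>')) (fa_of_K K x))))
              (fa_neg (fa_mult sf' (fa_of_ohat \<beta>2))))"
      using inS_E[OF k2(3) sfA'] sfA' rho' x k2 by auto
    have u: "fa_mult sf (fa_of_ohat \<beta>1) \<in> Af K" using sfA b1 by auto
    obtain l \<delta> where l: "l \<in> K" "\<delta> \<in> Ohat K"
      "isZ (fa_add (fa_of_K K l) (fa_neg (fa_add (fa_mult sf (fa_of_ohat \<beta>1)) (fa_of_ohat (\<lambda>n. of_nat M * \<delta> n)))))"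
      using Af_approx[OF u M] by blast
    define l2 where "l2 = k0 * k1 - k2 - k0 * l"
    have l2K: "l2 \<in> K" unfolding l2_def using k0 k1 k2 l by (intro K_diff K_mult) auto
    have in1: "in_sOhat K sf (fa_of_K K l)"
    proof (rule inS_I[where \<beta> = "\<lambda>n. \<beta>1 n + of_nat (E2 * e) * \<delta> n * \<gamma> n"])
      have c2: "fa_of_ohat (\<lambda>n. of_nat (E2 * e) * \<delta> n) \<in> Af K"
        using l(2) by (intro Af_ohat Ohat_smult) auto
      show "isZ (fa_add (fa_of_K K l) (fa_neg (fa_mult sf (fa_of_ohat (\<lambda>n. \<beta>1 n + of_nat (E2 * e) * \<delta> n * \<gamma> n)))))"
        by (rule isZ_comb[OF l(3) g(2) isZ_0 isZ_0 isZ_0 one_Af c2 one_Af one_Af one_Af])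
           (use sfA l g b1 in \<open>auto simp: fst_Af algebra_simps M_def intro!: Ohat_mult Ohat_add Ohat_smult Af_add Af_neg Af_mult Af_ohat\<close>)
    qed (use sfA l g b1 in \<open>auto intro!: Ohat_mult Ohat_add Ohat_smult\<close>)
    have cOK: "(of_nat e * k0) * of_nat E1 \<in> OK" using OK_mult[OF e(2) OK_of_nat[of E1]] .
    have bf: "(\<lambda>n. - \<beta>2 n - (of_nat e * k0) * of_nat E1 * \<delta> n * \<gamma>' n) \<in> Ohat K"
      using Ohat_diff[OF Ohat_uminus[OF b2(1)] Ohat_mult[OF Ohat_smult[OF cOK l(2)] g'(1)]] by simp
    have in2: "in_sOhat K sf' (fa_of_K K l2)"
    proof (rule inS_I[where \<beta> = "\<lambda>n. - \<beta>2 n - (of_nat e * k0) * of_nat E1 * \<delta> n * \<gamma>' n"])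
      have ca: "fa_of_K K k0 \<in> Af K" using k0 by auto
      have cb: "(1, \<lambda>n. -1) \<in> Af K" by (rule Af_const) (auto intro: OK_uminus)
      have cc: "fa_of_K K (- k0) \<in> Af K" using k0 by (auto intro: K_uminus)
      have cd: "fa_of_K K (- x) \<in> Af K" using x by (auto intro: K_uminus)
      have ce: "fa_of_ohat (\<lambda>n. - (of_nat e * k0) * of_nat E1 * \<delta> n) \<in> Af K"
        using Af_ohat[OF Ohat_smult[OF OK_mult[OF OK_uminus[OF e(2)] OK_of_nat[of E1]] l(2)]] .
      have mk0: "- k0 \<in> K" and mx: "- x \<in> K" using k0 x by (auto intro: K_uminus)
      show "isZ (fa_add (fa_of_K K l2) (fa_neg (fa_mult sf' (fa_of_ohat (\<lambda>n. - \<beta>2 n - (of_nat e * k0) * of_nat E1 * \<delta> n * \<gamma>' n)))))"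
        by (rule isZ_comb[OF b1(2) b2(2) l(3) HZ g'(2) ca cb cc cd ce])
           (use sfA sfA' l g' b1 b2 k0 k1 k2 x rho rho' l2K e bf mk0 mx in \<open>auto simp: fst_Af algebra_simps M_def l2_def
               intro!: Af_add Af_neg Af_mult Af_ohat Af_K\<close>)
    qed (use sfA' bf l2K in auto)
    have "c1 - c2 = l / z + l2 / z'"
      using k1(2) k2(2) zz k0 z unfolding l2_def by (simp add: field_simps)
    moreover have "l / z \<in> Lambda K (sf, z)" unfolding Lambda_mem using l(1) in1 by blast
    moreover have "l2 / z' \<in> Lambda K (sf', z')" unfolding Lambda_mem using l2K in2 by blast
    ultimately show ?thesis unfolding setsum_def by blast
  qed
  show ?thesis unfolding commensurable_def using span phi by auto
qed

end

context iqf begin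

lemma modK_if_comm:
  assumes rho: "\<rho> \<in> Ohat K" and sf: "sf \<in> Af_units K" and z: "z \<noteq> 0"
    and rho': "\<rho>' \<in> Ohat K" and sf': "sf' \<in> Af_units K" and z': "z' \<noteq> 0"
    and C: "commensurable K (\<rho>, (sf, z)) (\<rho>', (sf', z'))"
  shows "modK_eq K (Theta (\<rho>, (sf, z))) (Theta (\<rho>', (sf', z')))"
proof -
  have sfA: "sf \<in> Af K" and sfA': "sf' \<in> Af K" using sf sf' by (auto simp: Af_units_Af)
  have span: "(\<lambda>k. k / z) ` K = (\<lambda>k. k / z') ` K"
    using C Kspan_Lambda sf sf' z z' unfolding commensurable_def by simp
  have "1 / z \<in> (\<lambda>k. k / z') ` K" using span[symmetric] by (auto simp: image_iff intro!: bexI[of _ 1])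
  then obtain k0 where k0: "k0 \<in> K" "1 / z = k0 / z'" by blast
  define lam where "lam = z' / z"
  have lamK: "lam \<in> K" using k0 z z' unfolding lam_def by (simp add: field_simps)
  have lam0: "lam \<noteq> 0" using z z' unfolding lam_def by simp
  have zz: "z' = lam * z" using z unfolding lam_def by simp
  define T where "T = fa_add (fa_mult (fa_of_K K lam) (fa_mult (fa_of_ohat \<rho>) sf)) (fa_neg (fa_mult (fa_of_ohat \<rho>') sf'))"
  have TA: "T \<in> Af K" unfolding T_def using lamK rho rho' sfA sfA' by auto
  obtain d where d: "d > 0" "of_nat d * lam \<in> OK" "fa_of_K K lam = (d, \<lambda>n. of_nat d * lam)"
    using fa_of_K_rep[OF lamK] by blast
  obtain D a where sfr: "sf = (D, a)" "D > 0" "a \<in> Ohat K" using sfA by (rule AfE)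
  obtain D' a' where sfr': "sf' = (D', a')" "D' > 0" "a' \<in> Ohat K" using sfA' by (rule AfE)
  have "isZ T"
  proof (rule isZ_alldiv[OF TA, of "d * D * D'"])
    show "d * D * D' > 0" using d sfr sfr' by simp
    fix m :: nat assume m: "m > 0"
    define x where "x = 1 / (of_nat m :: complex)"
    have x: "x \<in> K" unfolding x_def by (simp add: K_divide)
    obtain k1 where k1: "k1 \<in> K"
      "in_sOhat K sf (fa_add (fa_of_K K k1) (fa_neg (fa_mult (fa_mult sf (fa_of_ohat \<rho>)) (fa_of_K K x))))"
      using phi_exists[OF sf rho x] by blast
    obtain k2 where k2: "k2 \<in> K"
      "in_sOhat K sf' (fa_add (fa_of_K K k2) (fa_neg (fa_mult (fa_mult sf' (fa_of_ohat \<rho>')) (fa_of_K K x))))"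
      using phi_exists[OF sf' rho' x] by blast
    have "phi_rep K \<rho> (sf, z) x (k1 / z)" unfolding phi_rep_def using k1 by auto
    moreover have "phi_rep K \<rho>' (sf', z') x (k2 / z')" unfolding phi_rep_def using k2 by auto
    ultimately have "k1 / z - k2 / z' \<in> setsum (Lambda K (sf, z)) (Lambda K (sf', z'))"
      using C x unfolding commensurable_def by auto
    then obtain l1 l2 where l1: "l1 \<in> K" "in_sOhat K sf (fa_of_K K l1)"
      and l2: "l2 \<in> K" "in_sOhat K sf' (fa_of_K K l2)" and eq: "k1 / z - k2 / z' = l1 / z + l2 / z'"
      unfolding setsum_def Lambda_mem by blast
    have rel: "lam * k1 - k2 = lam * l1 + l2"
      using eq zz z lam0 by (simp add: field_simps)
    obtain \<beta>1 where b1: "\<beta>1 \<in> Ohat K"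
      "isZ (fa_add (fa_add (fa_of_K K k1) (fa_neg (fa_mult (fa_mult sf (fa_of_ohat \<rho>)) (fa_of_K K x))))
              (fa_neg (fa_mult sf (fa_of_ohat \<beta>1))))"
      using inS_E[OF k1(2) sfA] sfA rho x k1 by auto
    obtain \<beta>2 where b2: "\<beta>2 \<in> Ohat K"
      "isZ (fa_add (fa_add (fa_of_K K k2) (fa_neg (fa_mult (fa_mult sf' (fa_of_ohat \<rho>')) (fa_of_K K x))))
              (fa_neg (fa_mult sf' (fa_of_ohat \<beta>2))))"
      using inS_E[OF k2(2) sfA'] sfA' rho' x k2 by auto
    obtain \<gamma>1 where g1: "\<gamma>1 \<in> Ohat K" "isZ (fa_add (fa_of_K K l1) (fa_neg (fa_mult sf (fa_of_ohat \<gamma>1))))"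
      using inS_E[OF l1(2) sfA] l1 by auto
    obtain \<gamma>2 where g2: "\<gamma>2 \<in> Ohat K" "isZ (fa_add (fa_of_K K l2) (fa_neg (fa_mult sf' (fa_of_ohat \<gamma>2))))"
      using inS_E[OF l2(2) sfA'] l2 by auto
    define S where "S = fa_add (fa_mult (fa_mult (fa_of_K K lam) sf) (fa_of_ohat (\<lambda>n. \<gamma>1 n - \<beta>1 n)))
                              (fa_mult sf' (fa_of_ohat (\<lambda>n. \<gamma>2 n + \<beta>2 n)))"
    have SA: "S \<in> Af K" unfolding S_def using lamK sfA sfA' b1 b2 g1 g2 by (auto intro!: Ohat_diff Ohat_add)
    have fS: "fst S = d * D * D'" unfolding S_def using d sfr sfr' by simp
    have mlam: "- lam \<in> K" using lamK by (rule K_uminus)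
    have Z: "isZ (fa_add (fa_mult T (fa_of_K K x)) (fa_neg S))"
      by (rule isZ_comb[OF b1(2) b2(2) g1(2) g2(2) isZ_0 Af_K[OF mlam] one_Af Af_K[OF lamK] one_Af one_Af])
         (use sfA sfA' b1 b2 g1 g2 k1 k2 l1 l2 x rho rho' lamK mlam rel SA TA in
           \<open>auto simp: fst_Af algebra_simps S_def T_def intro!: Af_add Af_neg Af_mult Af_ohat Af_K\<close>)
    have "fa_eq K (fa_mult T (fa_of_K K x)) S"
      using Z fa_eq_isZ[of "fa_mult T (fa_of_K K x)" S] TA SA x by auto
    moreover have "S = (d * D * D', snd S)" using fS by (metis prod.collapse)
    ultimately show "\<exists>\<delta>\<in>Ohat K. fa_eq K (fa_mult T (fa_of_K K (1 / of_nat m))) (d * D * D', \<delta>)"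
      using snd_Af[OF SA] unfolding x_def by metis
  qed
  hence "fa_eq K (fa_mult (fa_of_K K lam) (fa_mult (fa_of_ohat \<rho>) sf)) (fa_mult (fa_of_ohat \<rho>') sf')"
    using fa_eq_isZ lamK rho rho' sfA sfA' unfolding T_def by auto
  hence "fa_eq K (fa_mult (fa_of_ohat \<rho>') sf') (fa_mult (fa_of_K K lam) (fa_mult (fa_of_ohat \<rho>) sf))"
    by (rule fa_eq_sym)
  thus ?thesis unfolding modK_eq_def Theta_def using lamK lam0 zz by auto
qed

end

context iqf begin

lemma part1:
  assumes rho: "\<rho> \<in> Ohat K" and sf: "sf \<in> Af_units K"
    and rho': "\<rho>' \<in> Ohat K" and sf': "sf' \<in> Af_units K"
    and H: "klat_eq K (\<rho>, (sf, z)) (\<rho>', (sf', z'))"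
  shows "modK_eq K (Theta (\<rho>, (sf, z))) (Theta (\<rho>', (sf', z')))"
proof -
  have sfA: "sf \<in> Af K" and sfA': "sf' \<in> Af K" using sf sf' by (auto simp: Af_units_Af)
  obtain x y where xy: "x \<in> Ohat K" "y \<in> Ohat K" "ohat_eq K (\<lambda>n. x n * y n) (\<lambda>n. 1)"
    "ohat_eq K \<rho>' (\<lambda>n. y n * \<rho> n)" "modK_eq K (fa_mult (fa_of_ohat x) sf, z) (sf', z')"
    using H unfolding klat_eq_def by auto
  obtain k where k: "k \<in> K" "k \<noteq> 0" "fa_eq K sf' (fa_mult (fa_of_K K k) (fa_mult (fa_of_ohat x) sf))" "z' = k * z"
    using xy(5) unfolding modK_eq_def by auto
  have Z1: "isZ (fa_add (fa_of_ohat \<rho>') (fa_neg (fa_of_ohat (\<lambda>n. y n * \<rho> n))))"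
    using fa_eq_isZ[of "fa_of_ohat \<rho>'" "fa_of_ohat (\<lambda>n. y n * \<rho> n)"] fa_ohat_cong[OF xy(4)] rho' xy rho
    by (auto intro: Ohat_mult)
  have Z2: "isZ (fa_add sf' (fa_neg (fa_mult (fa_of_K K k) (fa_mult (fa_of_ohat x) sf))))"
    using fa_eq_isZ[of sf' "fa_mult (fa_of_K K k) (fa_mult (fa_of_ohat x) sf)"] k sfA sfA' xy by auto
  have Z3: "isZ (fa_add (fa_of_ohat (\<lambda>n. x n * y n)) (fa_neg (fa_of_ohat (\<lambda>n. 1))))"
    using fa_eq_isZ[of "fa_of_ohat (\<lambda>n. x n * y n)" "fa_of_ohat (\<lambda>n. 1)"] fa_ohat_cong[OF xy(3)] xy
    by (auto intro: Ohat_mult)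
  have cb: "fa_of_ohat (\<lambda>n. y n * \<rho> n) \<in> Af K" using xy rho by (auto intro: Ohat_mult)
  have cc: "fa_mult (fa_of_K K k) (fa_mult (fa_of_ohat \<rho>) sf) \<in> Af K" using k rho sfA by auto
  have "isZ (fa_add (fa_mult (fa_of_ohat \<rho>') sf') (fa_neg (fa_mult (fa_of_K K k) (fa_mult (fa_of_ohat \<rho>) sf))))"
    by (rule isZ_comb[OF Z1 Z2 Z3 isZ_0 isZ_0 sfA' cb cc one_Af one_Af])
       (use sfA sfA' rho rho' xy k in \<open>auto simp: fst_Af algebra_simps intro!: Af_add Af_neg Af_mult Af_ohat Af_K\<close>)
  hence "fa_eq K (fa_mult (fa_of_ohat \<rho>') sf') (fa_mult (fa_of_K K k) (fa_mult (fa_of_ohat \<rho>) sf))"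
    using fa_eq_isZ k rho rho' sfA sfA' by auto
  thus ?thesis unfolding modK_eq_def Theta_def using k by auto
qed

lemma part2:
  assumes "p \<in> klattices K" shows "Theta p \<in> Adot K"
  using assms unfolding klattices_def ideles_def Adot_def Theta_def
  by (auto simp: Af_units_Af)

lemma part3:
  assumes "y \<in> Adot K" shows "\<exists>p \<in> klattices K. modK_eq K (Theta p) y"
proof -
  obtain D \<alpha> z where y: "y = ((D, \<alpha>), z)" "D > 0" "\<alpha> \<in> Ohat K" "z \<noteq> 0"
    using assms unfolding Adot_def by (auto elim!: AfE)
  have u: "(D, \<lambda>n. 1) \<in> Af_units K"
    unfolding Af_units_def
  proof (intro CollectI conjI bexI)
    show "(D, \<lambda>n. 1) \<in> Af K" "(1, \<lambda>n. of_nat D) \<in> Af K" using y by auto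
    show "fa_eq K (fa_mult (D, \<lambda>n. 1) (1, \<lambda>n. of_nat D)) (1, \<lambda>n. 1)"
      by (rule fa_eq_exact) (simp add: fa_mult_def)
  qed
  define p where "p = (\<alpha>, ((D, \<lambda>n::nat. 1 :: complex), z))"
  have "p \<in> klattices K" unfolding p_def klattices_def ideles_def using y u by auto
  moreover have "modK_eq K (Theta p) y"
    unfolding modK_eq_def Theta_def p_def y(1)
    by (rule bexI[of _ 1]) (use y in \<open>auto intro!: fa_eq_val\<close>)
  ultimately show ?thesis by blast
qed

end

theorem mainTheorem6:
  fixes K :: "complex set"
  assumes "imag_quadratic K"
  shows "(\<forall>p \<in> klattices K. \<forall>q \<in> klattices K.
            klat_eq K p q \<longrightarrow> modK_eq K (Theta p) (Theta q))
       \<and> (\<forall>p \<in> klattices K. Theta p \<in> Adot K)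
       \<and> (\<forall>y \<in> Adot K. \<exists>p \<in> klattices K. modK_eq K (Theta p) y)
       \<and> (\<forall>p \<in> klattices K. \<forall>q \<in> klattices K.
            modK_eq K (Theta p) (Theta q) \<longleftrightarrow> commensurable K p q)"
proof -
  interpret iqf K using assms by unfold_locales
  have A: "klat_eq K p q \<longrightarrow> modK_eq K (Theta p) (Theta q)"
    if "p \<in> klattices K" "q \<in> klattices K" for p q
    using that part1 unfolding klattices_def ideles_def by auto
  have B: "modK_eq K (Theta p) (Theta q) \<longleftrightarrow> commensurable K p q"
    if "p \<in> klattices K" "q \<in> klattices K" for p q
    using that comm_if_modK modK_if_comm unfolding klattices_def ideles_def by auto
  show ?thesis using A B part2 part3 by blast
qed

end
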